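(* Let $n\ge3$ and $k\ge0$ be integers with $k<n\le 2k$. If $S\subseteq\mathrm{Inc}(A,B)$ is an independent set in $G_n^k$ that is not reversible, then \[|S|\le 2+\frac{(2k+2-n)(2k+1-n)}{2}.\]
   Context: For integers $n\ge3$, $k\ge0$, the crown $S_n^k$ is the poset with ground set $A\cup B$, $A=\{a_1,\dots,a_{n+k}\}$, $B=\{b_1,\dots,b_{n+k}\}$, indices cyclic modulo $n+k$; elements of $A$ are pairwise incomparable, as are elements of $B$, and $a_i$ is incomparable to $b_j$ when $j\in\{i,i+1,\dots,i+k\}$ (mod $n+k$), while $a_i<b_j$ otherwise. $\mathrm{Inc}(A,B)$ is the set of pairs $(a,b)\in A\times B$ with $a$ incomparable to $b$. The graph $G_n^k$ has vertex set $\mathrm{Inc}(A,B)$, with $(a,b)$ adjacent to $(x,y)$ iff $a<y$ and $x<b$ in $S_n^k$. A set $R\subseteq\mathrm{Inc}(A,B)$ is reversible if there is a linear extension $L$ of $S_n^k$ with $b<a$ in $L$ for all $(a,b)\in R$. *)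

theory Defs
  imports Complex_Main
begin

text \<open>Elements of the crown S_n^k: CA i stands for a_i, CB j for b_j, indices in {0..<n+k}
  (the paper's cyclic indices 1..n+k, shifted to 0..n+k-1).\<close>
datatype cel = CA nat | CB nat

definition crown_ground :: "nat \<Rightarrow> nat \<Rightarrow> cel set" where
  "crown_ground n k = {CA i | i. i < n + k} \<union> {CB j | j. j < n + k}"

definition crown_less :: "nat \<Rightarrow> nat \<Rightarrow> cel \<Rightarrow> cel \<Rightarrow> bool" where
  "crown_less n k x y \<longleftrightarrow> (\<exists>i j. x = CA i \<and> y = CB j \<and> i < n + k \<and> j < n + k \<and>
      \<not> (\<exists>t \<le> k. j = (i + t) mod (n + k)))"

definition crown_Inc :: "nat \<Rightarrow> nat \<Rightarrow> (cel \<times> cel) set" where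
  "crown_Inc n k = {(CA i, CB j) | i j. i < n + k \<and> j < n + k \<and> \<not> crown_less n k (CA i) (CB j)}"

definition crown_adj :: "nat \<Rightarrow> nat \<Rightarrow> cel \<times> cel \<Rightarrow> cel \<times> cel \<Rightarrow> bool" where
  "crown_adj n k p q \<longleftrightarrow> crown_less n k (fst p) (snd q) \<and> crown_less n k (fst q) (snd p)"

definition crown_independent :: "nat \<Rightarrow> nat \<Rightarrow> (cel \<times> cel) set \<Rightarrow> bool" where
  "crown_independent n k S \<longleftrightarrow> S \<subseteq> crown_Inc n k \<and>
      (\<forall>p\<in>S. \<forall>q\<in>S. \<not> crown_adj n k p q)"

definition crown_linext :: "nat \<Rightarrow> nat \<Rightarrow> cel rel \<Rightarrow> bool" where
  "crown_linext n k L \<longleftrightarrow> linear_order_on (crown_ground n k) L \<and>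
      (\<forall>x y. crown_less n k x y \<longrightarrow> (x, y) \<in> L)"

definition crown_reversible :: "nat \<Rightarrow> nat \<Rightarrow> (cel \<times> cel) set \<Rightarrow> bool" where
  "crown_reversible n k R \<longleftrightarrow> R \<subseteq> crown_Inc n k \<and>
      (\<exists>L. crown_linext n k L \<and> (\<forall>(a, b)\<in>R. (b, a) \<in> L))"

end

theory Submission
  imports Defs
begin

definition fd :: "nat \<Rightarrow> nat \<Rightarrow> nat \<Rightarrow> nat" where
  "fd m a b = (if a \<le> b then b - a else m + b - a)"
definition memc :: "nat \<Rightarrow> nat \<Rightarrow> nat \<Rightarrow> nat \<Rightarrow> nat \<Rightarrow> bool" where
  "memc m x y p z \<longleftrightarrow> fd m z p \<le> x \<or> fd m p z \<le> y"
definition off :: "nat \<Rightarrow> nat \<Rightarrow> nat \<Rightarrow> int" where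
  "off m k w = (if w \<le> k then int w else int w - int m)"

lemma fd_int: "a < m \<Longrightarrow> int (fd m a b) = (if a \<le> b then int b - int a else int m + int b - int a)"
  by (simp add: fd_def of_nat_diff)

lemma memc_int: "p < m \<Longrightarrow> z < m \<Longrightarrow> memc m x y p z \<longleftrightarrow>
   ((if z \<le> p then int p - int z else int m + int p - int z) \<le> int x \<or>
    (if p \<le> z then int z - int p else int m + int z - int p) \<le> int y)"
  unfolding memc_def by (simp only: zle_int[symmetric] fd_int)

lemma arc0:
  assumes "P < m" "w < m" "x + y \<le> k" "2*k < m" "memc m x y P 0"
  shows "memc m x y P w \<longleftrightarrow> (off m k P - int x \<le> off m k w \<and> off m k w \<le> off m k P + int y)"
proof -
  have m0: "0 < m" using assms by linarith
  show ?thesis using assms(1-4) assms(5)[unfolded memc_int[OF assms(1) m0]]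
    unfolding memc_int[OF assms(1,2)] off_def by (auto split: if_splits)
qed

lemma arcn0:
  assumes "P < m" "w < m" "x + y \<le> k" "2*k < m" "\<not> memc m x y P 0"
  shows "memc m x y P w \<longleftrightarrow> (int P - int x \<le> int w \<and> int w \<le> int P + int y)"
proof -
  have m0: "0 < m" using assms by linarith
  show ?thesis using assms(1-4) assms(5)[unfolded memc_int[OF assms(1) m0]]
    unfolding memc_int[OF assms(1,2)] by (auto split: if_splits)
qed

lemma fd_trans: "a < m \<Longrightarrow> b < m \<Longrightarrow> p < m \<Longrightarrow> fd m a b = fd m (fd m p a) (fd m p b)"
  unfolding fd_def by (cases "p \<le> a"; cases "p \<le> b"; cases "a \<le> b"; simp)
lemma fd_lt: "a < m \<Longrightarrow> b < m \<Longrightarrow> fd m a b < m" by (auto simp: fd_def)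
lemma fd_self[simp]: "fd m a a = 0" by (simp add: fd_def)

lemma memc_trans: "p < m \<Longrightarrow> z < m \<Longrightarrow> b < m \<Longrightarrow>
   memc m x y p z \<longleftrightarrow> memc m x y (fd m b p) (fd m b z)"
  unfolding memc_def using fd_trans[of z m p b] fd_trans[of p m z b] by simp

lemma helly0:
  assumes "2*k < m" "P1 < m" "P2 < m" "P3 < m" "Q1 < m" "Q2 < m" "Q3 < m"
    "x1 + y1 \<le> k" "x2 + y2 \<le> k" "x3 + y3 \<le> k"
    "memc m x1 y1 P1 0" "memc m x2 y2 P2 0" "memc m x3 y3 P3 0"
    "memc m x1 y1 P1 Q3" "memc m x2 y2 P2 Q3" "\<not> memc m x3 y3 P3 Q3"
    "memc m x2 y2 P2 Q1" "memc m x3 y3 P3 Q1" "\<not> memc m x1 y1 P1 Q1"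
    "memc m x1 y1 P1 Q2" "memc m x3 y3 P3 Q2" "\<not> memc m x2 y2 P2 Q2"
  shows False
proof -
  note a1 = arc0[OF assms(2) _ assms(8) assms(1) assms(11)]
  note a2 = arc0[OF assms(3) _ assms(9) assms(1) assms(12)]
  note a3 = arc0[OF assms(4) _ assms(10) assms(1) assms(13)]
  have "off m k P1 - int x1 \<le> off m k Q3 \<and> off m k Q3 \<le> off m k P1 + int y1"
    using assms(14) a1[OF assms(7)] by simp
  moreover have "off m k P2 - int x2 \<le> off m k Q3 \<and> off m k Q3 \<le> off m k P2 + int y2"
    using assms(15) a2[OF assms(7)] by simp
  moreover have "\<not> (off m k P3 - int x3 \<le> off m k Q3 \<and> off m k Q3 \<le> off m k P3 + int y3)"
    using assms(16) a3[OF assms(7)] by simp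
  moreover have "off m k P2 - int x2 \<le> off m k Q1 \<and> off m k Q1 \<le> off m k P2 + int y2"
    using assms(17) a2[OF assms(5)] by simp
  moreover have "off m k P3 - int x3 \<le> off m k Q1 \<and> off m k Q1 \<le> off m k P3 + int y3"
    using assms(18) a3[OF assms(5)] by simp
  moreover have "\<not> (off m k P1 - int x1 \<le> off m k Q1 \<and> off m k Q1 \<le> off m k P1 + int y1)"
    using assms(19) a1[OF assms(5)] by simp
  moreover have "off m k P1 - int x1 \<le> off m k Q2 \<and> off m k Q2 \<le> off m k P1 + int y1"
    using assms(20) a1[OF assms(6)] by simp
  moreover have "off m k P3 - int x3 \<le> off m k Q2 \<and> off m k Q2 \<le> off m k P3 + int y3"
    using assms(21) a3[OF assms(6)] by simp
  moreover have "\<not> (off m k P2 - int x2 \<le> off m k Q2 \<and> off m k Q2 \<le> off m k P2 + int y2)"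
    using assms(22) a2[OF assms(6)] by simp
  moreover have "off m k P1 - int x1 \<le> 0 \<and> 0 \<le> off m k P1 + int y1"
    using assms(11) a1[of 0] assms(1) by (simp add: off_def)
  moreover have "off m k P2 - int x2 \<le> 0 \<and> 0 \<le> off m k P2 + int y2"
    using assms(12) a2[of 0] assms(1) by (simp add: off_def)
  moreover have "off m k P3 - int x3 \<le> 0 \<and> 0 \<le> off m k P3 + int y3"
    using assms(13) a3[of 0] assms(1) by (simp add: off_def)
  ultimately show False by linarith
qed

lemma helly:
  assumes "2*k < m" "c < m" "p1 < m" "p2 < m" "p3 < m" "q1 < m" "q2 < m" "q3 < m"
    "x1 + y1 \<le> k" "x2 + y2 \<le> k" "x3 + y3 \<le> k"
    "memc m x1 y1 p1 c" "memc m x2 y2 p2 c" "memc m x3 y3 p3 c"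
    "memc m x1 y1 p1 q3" "memc m x2 y2 p2 q3" "\<not> memc m x3 y3 p3 q3"
    "memc m x2 y2 p2 q1" "memc m x3 y3 p3 q1" "\<not> memc m x1 y1 p1 q1"
    "memc m x1 y1 p1 q2" "memc m x3 y3 p3 q2" "\<not> memc m x2 y2 p2 q2"
  shows False
proof -
  have e: "\<And>x y p z. p < m \<Longrightarrow> z < m \<Longrightarrow> memc m x y p z \<longleftrightarrow> memc m x y (fd m c p) (fd m c z)"
    using memc_trans assms(2) by blast
  show False
    apply (rule helly0[of k m "fd m c p1" "fd m c p2" "fd m c p3" "fd m c q1" "fd m c q2" "fd m c q3"
          x1 y1 x2 y2 x3 y3])
    using assms e[of p1 c] e[of p2 c] e[of p3 c] e[of p1 q3] e[of p2 q3] e[of p3 q3]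
       e[of p2 q1] e[of p3 q1] e[of p1 q1] e[of p1 q2] e[of p3 q2] e[of p2 q2] fd_lt
    by auto
qed

lemma covern0:
  assumes "2*k < m" "p1 < m" "p2 < m" "p3 < m" "q1 < m" "q2 < m" "q3 < m"
    "x1 + y1 \<le> k" "x2 + y2 \<le> k" "x3 + y3 \<le> k"
    "\<not> memc m x1 y1 p1 0" "\<not> memc m x2 y2 p2 0" "\<not> memc m x3 y3 p3 0"
    "memc m x1 y1 p1 q3" "memc m x2 y2 p2 q3" "\<not> memc m x3 y3 p3 q3"
    "memc m x2 y2 p2 q1" "memc m x3 y3 p3 q1" "\<not> memc m x1 y1 p1 q1"
    "memc m x1 y1 p1 q2" "memc m x3 y3 p3 q2" "\<not> memc m x2 y2 p2 q2"
  shows False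
proof -
  note a1 = arcn0[OF assms(2) _ assms(8) assms(1) assms(11)]
  note a2 = arcn0[OF assms(3) _ assms(9) assms(1) assms(12)]
  note a3 = arcn0[OF assms(4) _ assms(10) assms(1) assms(13)]
  have "int p1 - int x1 \<le> int q3 \<and> int q3 \<le> int p1 + int y1" using assms(14) a1[OF assms(7)] by simp
  moreover have "int p2 - int x2 \<le> int q3 \<and> int q3 \<le> int p2 + int y2" using assms(15) a2[OF assms(7)] by simp
  moreover have "\<not>(int p3 - int x3 \<le> int q3 \<and> int q3 \<le> int p3 + int y3)" using assms(16) a3[OF assms(7)] by simp
  moreover have "int p2 - int x2 \<le> int q1 \<and> int q1 \<le> int p2 + int y2" using assms(17) a2[OF assms(5)] by simp
  moreover have "int p3 - int x3 \<le> int q1 \<and> int q1 \<le> int p3 + int y3" using assms(18) a3[OF assms(5)] by simp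
  moreover have "\<not>(int p1 - int x1 \<le> int q1 \<and> int q1 \<le> int p1 + int y1)" using assms(19) a1[OF assms(5)] by simp
  moreover have "int p1 - int x1 \<le> int q2 \<and> int q2 \<le> int p1 + int y1" using assms(20) a1[OF assms(6)] by simp
  moreover have "int p3 - int x3 \<le> int q2 \<and> int q2 \<le> int p3 + int y3" using assms(21) a3[OF assms(6)] by simp
  moreover have "\<not>(int p2 - int x2 \<le> int q2 \<and> int q2 \<le> int p2 + int y2)" using assms(22) a2[OF assms(6)] by simp
  ultimately show False by linarith
qed

lemma cover:
  assumes "2*k < m" "z < m" "p1 < m" "p2 < m" "p3 < m" "q1 < m" "q2 < m" "q3 < m"
    "x1 + y1 \<le> k" "x2 + y2 \<le> k" "x3 + y3 \<le> k"
    "memc m x1 y1 p1 q3" "memc m x2 y2 p2 q3" "\<not> memc m x3 y3 p3 q3"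
    "memc m x2 y2 p2 q1" "memc m x3 y3 p3 q1" "\<not> memc m x1 y1 p1 q1"
    "memc m x1 y1 p1 q2" "memc m x3 y3 p3 q2" "\<not> memc m x2 y2 p2 q2"
  shows "memc m x1 y1 p1 z \<or> memc m x2 y2 p2 z \<or> memc m x3 y3 p3 z"
proof (rule ccontr)
  assume h: "\<not> (memc m x1 y1 p1 z \<or> memc m x2 y2 p2 z \<or> memc m x3 y3 p3 z)"
  have e: "\<And>x y p w. p < m \<Longrightarrow> w < m \<Longrightarrow> memc m x y p w \<longleftrightarrow> memc m x y (fd m z p) (fd m z w)"
    using memc_trans assms(2) by blast
  show False
    apply (rule covern0[of k m "fd m z p1" "fd m z p2" "fd m z p3" "fd m z q1" "fd m z q2" "fd m z q3"
          x1 y1 x2 y2 x3 y3])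
    using assms h e[of p1 z] e[of p2 z] e[of p3 z] e[of p1 q3] e[of p2 q3] e[of p3 q3]
       e[of p2 q1] e[of p3 q1] e[of p1 q1] e[of p1 q2] e[of p3 q2] e[of p2 q2] fd_lt
    by auto
qed

definition zn :: "nat \<Rightarrow> nat \<Rightarrow> nat \<Rightarrow> nat \<Rightarrow> nat \<Rightarrow> bool" where
  "zn m k d p w \<longleftrightarrow> k + 1 \<le> fd m p w \<and> fd m p w + 1 \<le> k + d"

lemma zn_int: "p < m \<Longrightarrow> zn m k d p w \<longleftrightarrow>
   (int k + 1 \<le> (if p \<le> w then int w - int p else int m + int w - int p) \<and>
    (if p \<le> w then int w - int p else int m + int w - int p) + 1 \<le> int k + int d)"
  unfolding zn_def by (simp only: zle_int[symmetric] fd_int of_nat_add of_nat_1)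

lemma lemZ0:
  assumes "m = 2*k + d" "1 \<le> d" "0 < a" "a < p1" "p1 < p2" "p2 < m"
    "x0 + y0 \<le> k" "x1 + y1 \<le> k" "x2 + y2 \<le> k" "xj + yj \<le> k"
    "memc m x0 y0 0 p1" "\<not> memc m x0 y0 0 p2"
    "memc m x1 y1 p1 p2" "\<not> memc m x1 y1 p1 0"
    "memc m x2 y2 p2 0" "\<not> memc m x2 y2 p2 p1"
    "memc m x1 y1 p1 a \<or> memc m xj yj a p1"
    "memc m x2 y2 p2 a \<or> memc m xj yj a p2"
  shows "(\<forall>w<m. zn m k d 0 w \<longrightarrow> memc m xj yj a w) \<or> (\<forall>w<m. zn m k d p1 w \<longrightarrow> memc m xj yj a w)
     \<or> (\<forall>w<m. zn m k d p2 w \<longrightarrow> memc m xj yj a w)"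
proof -
  have lt: "0 < m" "a < m" "p1 < m" "p2 < m" using assms by auto
  have F0: "int p1 \<le> int y0" "int p2 > int y0" "int m - int p2 > int x0"
    using assms(11,12) assms(3-6) unfolding memc_int[OF lt(1) lt(3)] memc_int[OF lt(1) lt(4)]
    by auto
  have F1: "int p2 - int p1 \<le> int y1" "int m - int p1 > int y1" "int p1 > int x1"
    using assms(13,14) assms(3-6) unfolding memc_int[OF lt(3) lt(4)] memc_int[OF lt(3) lt(1)]
    by auto
  have F2: "int m - int p2 \<le> int y2" "int p2 - int p1 > int x2" "int m - int p2 + int p1 > int y2"
    using assms(15,16) assms(3-6) unfolding memc_int[OF lt(4) lt(1)] memc_int[OF lt(4) lt(3)]
    by auto
  have K: "int x0 + int y0 \<le> int k" "int x1 + int y1 \<le> int k" "int x2 + int y2 \<le> int k"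
    "int xj + int yj \<le> int k" "int m = 2 * int k + int d" "1 \<le> int d"
    using assms(1,2,7-10) by auto
  have J1: "memc m x1 y1 p1 a \<longleftrightarrow> int p1 - int a \<le> int x1"
    unfolding memc_int[OF lt(3) lt(2)] using assms(3-6) K F1 by auto
  have J2: "memc m x2 y2 p2 a \<longleftrightarrow> int m - int p2 + int a \<le> int y2"
    unfolding memc_int[OF lt(4) lt(2)] using assms(3-6) K F2 by auto
  have A1: "memc m xj yj a p1 \<longleftrightarrow> int p1 - int a \<le> int yj"
    unfolding memc_int[OF lt(2) lt(3)] using assms(3-6) K F0 F1 F2 by auto
  have A2: "memc m xj yj a p2 \<longleftrightarrow> int p2 - int a \<le> int yj \<or> int m - int p2 + int a \<le> int xj"
    unfolding memc_int[OF lt(2) lt(4)] using assms(3-6) by auto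
  have Wj: "\<And>w. w < m \<Longrightarrow> memc m xj yj a w \<longleftrightarrow>
     ((if w \<le> a then int a - int w else int m + int a - int w) \<le> int xj \<or>
      (if a \<le> w then int w - int a else int m + int w - int a) \<le> int yj)"
    using memc_int[OF lt(2)] by blast
  have notboth: "\<not> (memc m x1 y1 p1 a \<and> memc m x2 y2 p2 a)"
    unfolding J1 J2 using K F0 F1 F2 by linarith
  have I: "int a < int p1" "int p1 < int p2" "int p2 < int m" "0 < int a" using assms(3-6) by auto
  have zone0: "\<forall>w<m. zn m k d 0 w \<longrightarrow> memc m xj yj a w" if h: "int p2 - int a \<le> int yj"
  proof (intro allI impI)
    fix w assume w: "w < m" "zn m k d 0 w"
    have z: "int k + 1 \<le> int w" "int w + 1 \<le> int k + int d" using w(2) zn_int[OF lt(1)] by simp_all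
    have aw: "a \<le> w" using z F0 K I by linarith
    have "int (fd m a w) = int w - int a" using fd_int[OF lt(2), of w] aw by simp
    hence "fd m a w \<le> yj" using z h K F0 F1 F2 I by linarith
    thus "memc m xj yj a w" by (simp add: memc_def)
  qed
  have zone1: "\<forall>w<m. zn m k d p1 w \<longrightarrow> memc m xj yj a w" if h: "int m - int p2 + int a \<le> int xj"
  proof (intro allI impI)
    fix w assume w: "w < m" "zn m k d p1 w"
    have z: "int k + 1 \<le> (if p1 \<le> w then int w - int p1 else int m + int w - int p1)"
       "(if p1 \<le> w then int w - int p1 else int m + int w - int p1) + 1 \<le> int k + int d"
      using w(2) zn_int[OF lt(3)] by simp_all
    have pw: "p1 \<le> w"
    proof (rule ccontr)
      assume "\<not> p1 \<le> w" thus False using z K F0 F1 F2 I by simp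
    qed
    hence z2: "int k + 1 \<le> int w - int p1" using z by simp
    have aw: "a < w" using z2 K F0 F1 F2 I by linarith
    have "int (fd m w a) = int m + int a - int w" using fd_int[OF w(1), of a] aw by simp
    hence "fd m w a \<le> xj" using z2 h K F0 F1 F2 I by linarith
    thus "memc m xj yj a w" by (simp add: memc_def)
  qed
  have zone2: "\<forall>w<m. zn m k d p2 w \<longrightarrow> memc m xj yj a w"
    if h: "int p1 - int a \<le> int yj" "int m - int p2 + int a \<le> int y2"
  proof (intro allI impI)
    fix w assume w: "w < m" "zn m k d p2 w"
    have z: "int k + 1 \<le> (if p2 \<le> w then int w - int p2 else int m + int w - int p2)"
       "(if p2 \<le> w then int w - int p2 else int m + int w - int p2) + 1 \<le> int k + int d"
      using w(2) zn_int[OF lt(4)] by simp_all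
    have pw: "\<not> p2 \<le> w"
    proof
      assume "p2 \<le> w" thus False using z w(1) K F0 F1 F2 I by simp
    qed
    hence z2: "int k + 1 \<le> int m + int w - int p2" "int m + int w - int p2 + 1 \<le> int k + int d"
      using z by simp_all
    have aw: "a \<le> w" using z2 h K F0 F1 F2 I by linarith
    have "int (fd m a w) = int w - int a" using fd_int[OF lt(2), of w] aw by simp
    hence "fd m a w \<le> yj" using z2 h K F0 F1 F2 I by linarith
    thus "memc m xj yj a w" by (simp add: memc_def)
  qed
  show ?thesis
  proof (cases "memc m x1 y1 p1 a")
    case True
    hence "memc m xj yj a p2" using notboth assms(18) by blast
    thus ?thesis using zone0 zone1 A2 by blast
  next
    case False
    hence a1: "int p1 - int a \<le> int yj" using assms(17) A1 by blast
    show ?thesis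
    proof (cases "memc m x2 y2 p2 a")
      case True thus ?thesis using zone2 a1 J2 by blast
    next
      case False
      hence "memc m xj yj a p2" using assms(18) by blast
      thus ?thesis using zone0 zone1 A2 by blast
    qed
  qed
qed


lemma mod_fd: "a < m \<Longrightarrow> b < m \<Longrightarrow> (a + fd m a b) mod m = b"
proof -
  assume a: "a < m" "b < m"
  show ?thesis
  proof (cases "a \<le> b")
    case True thus ?thesis using a by (simp add: fd_def)
  next
    case False
    hence "a + fd m a b = b + m" using a by (simp add: fd_def)
    thus ?thesis using a by simp
  qed
qed

definition rf :: "nat \<Rightarrow> nat \<Rightarrow> nat" where "rf m z = (if z = 0 then 0 else m - z)"
lemma rf_lt: "z < m \<Longrightarrow> rf m z < m" by (auto simp: rf_def)
lemma fd_rf: "a < m \<Longrightarrow> b < m \<Longrightarrow> fd m (rf m a) (rf m b) = fd m b a"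
  unfolding fd_def rf_def by (cases "a = 0"; cases "b = 0"; cases "a \<le> b"; simp)
lemma rf_rf: "z < m \<Longrightarrow> rf m (rf m z) = z" by (auto simp: rf_def)
lemma fd_swap: "a < m \<Longrightarrow> b < m \<Longrightarrow> a \<noteq> b \<Longrightarrow> fd m a b + fd m b a = m"
  by (auto simp: fd_def)

lemma fd_le: "a \<le> b \<Longrightarrow> fd m a b = b - a" by (simp add: fd_def)
lemma fd_gt: "b < a \<Longrightarrow> fd m a b = m + b - a" by (simp add: fd_def)

lemma fd_inj: "a < m \<Longrightarrow> b < m \<Longrightarrow> c < m \<Longrightarrow> fd m c a = fd m c b \<Longrightarrow> a = b"
  by (metis mod_fd)

lemma zn_trans: "p < m \<Longrightarrow> w < m \<Longrightarrow> b < m \<Longrightarrow> zn m k d p w \<longleftrightarrow> zn m k d (fd m b p) (fd m b w)"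
  unfolding zn_def using fd_trans[of p m w b] by simp

lemma lemZ_gap0:
  fixes x y :: "nat \<Rightarrow> nat"
  assumes "m = 2*k + d" "1 \<le> d" "P0 < m" "P1 < m" "P2 < m" "j < m"
    "x P0 + y P0 \<le> k" "x P1 + y P1 \<le> k" "x P2 + y P2 \<le> k" "x j + y j \<le> k"
    "memc m (x P0) (y P0) P0 P1" "\<not> memc m (x P0) (y P0) P0 P2"
    "memc m (x P1) (y P1) P1 P2" "\<not> memc m (x P1) (y P1) P1 P0"
    "memc m (x P2) (y P2) P2 P0" "\<not> memc m (x P2) (y P2) P2 P1"
    "memc m (x P1) (y P1) P1 j \<or> memc m (x j) (y j) j P1"
    "memc m (x P2) (y P2) P2 j \<or> memc m (x j) (y j) j P2"
    "0 < fd m P0 j" "fd m P0 j < fd m P0 P1" "fd m P0 P1 < fd m P0 P2"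
  shows "\<exists>t\<in>{P0,P1,P2}. \<forall>w<m. zn m k d t w \<longrightarrow> memc m (x j) (y j) j w"
proof -
  let ?u = "fd m P0"
  have e: "\<And>X Y p z. p < m \<Longrightarrow> z < m \<Longrightarrow> memc m X Y p z \<longleftrightarrow> memc m X Y (?u p) (?u z)"
    using memc_trans assms(3) by blast
  have u0: "?u P0 = 0" by simp
  have ul: "?u P1 < m" "?u P2 < m" using fd_lt assms(3-5) by auto
  have Z: "(\<forall>w<m. zn m k d 0 w \<longrightarrow> memc m (x j) (y j) (?u j) w) \<or>
    (\<forall>w<m. zn m k d (?u P1) w \<longrightarrow> memc m (x j) (y j) (?u j) w) \<or>
    (\<forall>w<m. zn m k d (?u P2) w \<longrightarrow> memc m (x j) (y j) (?u j) w)"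
  proof -
    have f1: "memc m (x P0) (y P0) 0 (?u P1)" using assms(11) e[OF assms(3) assms(4)] by simp
    have f2: "\<not> memc m (x P0) (y P0) 0 (?u P2)" using assms(12) e[OF assms(3) assms(5)] by simp
    have f3: "memc m (x P1) (y P1) (?u P1) (?u P2)" using assms(13) e[OF assms(4) assms(5)] by simp
    have f4: "\<not> memc m (x P1) (y P1) (?u P1) 0" using assms(14) e[OF assms(4) assms(3)] by simp
    have f5: "memc m (x P2) (y P2) (?u P2) 0" using assms(15) e[OF assms(5) assms(3)] by simp
    have f6: "\<not> memc m (x P2) (y P2) (?u P2) (?u P1)" using assms(16) e[OF assms(5) assms(4)] by simp
    have f7: "memc m (x P1) (y P1) (?u P1) (?u j) \<or> memc m (x j) (y j) (?u j) (?u P1)"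
      using assms(17) e[OF assms(4) assms(6)] e[OF assms(6) assms(4)] by simp
    have f8: "memc m (x P2) (y P2) (?u P2) (?u j) \<or> memc m (x j) (y j) (?u j) (?u P2)"
      using assms(18) e[OF assms(5) assms(6)] e[OF assms(6) assms(5)] by simp
    show ?thesis
      by (rule lemZ0[OF assms(1,2,19,20,21) ul(2) assms(7-10) f1 f2 f3 f4 f5 f6 f7 f8])
  qed
  have tr: "\<And>t. t < m \<Longrightarrow> (\<forall>w<m. zn m k d (?u t) w \<longrightarrow> memc m (x j) (y j) (?u j) w) \<Longrightarrow>
     (\<forall>w<m. zn m k d t w \<longrightarrow> memc m (x j) (y j) j w)"
  proof (intro allI impI)
    fix t w assume h: "t < m" "\<forall>w<m. zn m k d (?u t) w \<longrightarrow> memc m (x j) (y j) (?u j) w" "w < m" "zn m k d t w"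
    have "zn m k d (?u t) (?u w)" using h(4) zn_trans[OF h(1) h(3) assms(3)] by simp
    hence "memc m (x j) (y j) (?u j) (?u w)" using h(2) fd_lt[OF assms(3) h(3)] by blast
    thus "memc m (x j) (y j) j w" using e[OF assms(6) h(3)] by simp
  qed
  from Z show ?thesis
  proof (elim disjE)
    assume h: "\<forall>w<m. zn m k d 0 w \<longrightarrow> memc m (x j) (y j) (?u j) w"
    have "\<forall>w<m. zn m k d P0 w \<longrightarrow> memc m (x j) (y j) j w" using tr[OF assms(3)] h by simp
    thus ?thesis by blast
  next
    assume h: "\<forall>w<m. zn m k d (?u P1) w \<longrightarrow> memc m (x j) (y j) (?u j) w"
    have "\<forall>w<m. zn m k d P1 w \<longrightarrow> memc m (x j) (y j) j w" using tr[OF assms(4) h] .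
    thus ?thesis by blast
  next
    assume h: "\<forall>w<m. zn m k d (?u P2) w \<longrightarrow> memc m (x j) (y j) (?u j) w"
    have "\<forall>w<m. zn m k d P2 w \<longrightarrow> memc m (x j) (y j) j w" using tr[OF assms(5) h] .
    thus ?thesis by blast
  qed
qed


lemma lemZ_Y:
  fixes x y :: "nat \<Rightarrow> nat"
  assumes "m = 2*k + d" "1 \<le> d" "P0 < m" "P1 < m" "P2 < m" "j < m"
    "x P0 + y P0 \<le> k" "x P1 + y P1 \<le> k" "x P2 + y P2 \<le> k" "x j + y j \<le> k"
    "memc m (x P0) (y P0) P0 P1" "\<not> memc m (x P0) (y P0) P0 P2"
    "memc m (x P1) (y P1) P1 P2" "\<not> memc m (x P1) (y P1) P1 P0"
    "memc m (x P2) (y P2) P2 P0" "\<not> memc m (x P2) (y P2) P2 P1"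
    "memc m (x P0) (y P0) P0 j \<or> memc m (x j) (y j) j P0"
    "memc m (x P1) (y P1) P1 j \<or> memc m (x j) (y j) j P1"
    "memc m (x P2) (y P2) P2 j \<or> memc m (x j) (y j) j P2"
    "j \<noteq> P0" "j \<noteq> P1" "j \<noteq> P2" "P1 \<noteq> P0" "P2 \<noteq> P0"
    "fd m P0 P1 < fd m P0 P2"
  shows "\<exists>t\<in>{P0,P1,P2}. \<forall>w<m. zn m k d t w \<longrightarrow> memc m (x j) (y j) j w"
proof -
  let ?u = "fd m P0"
  have E: "\<And>A B. A < m \<Longrightarrow> B < m \<Longrightarrow> fd m A B = fd m (?u A) (?u B)"
    using fd_trans assms(3) by blast
  have ul: "?u P1 < m" "?u P2 < m" "?u j < m" using fd_lt assms(3-6) by auto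
  have nz: "?u j \<noteq> 0" "?u j \<noteq> ?u P1" "?u j \<noteq> ?u P2" "?u P1 \<noteq> 0"
    using fd_inj[of j m P0 P0] fd_inj[of j m P1 P0] fd_inj[of j m P2 P0] fd_inj[of P1 m P0 P0]
      assms(3-6,20-23) by auto
  consider (g0) "?u j < ?u P1" | (g1) "?u P1 < ?u j" "?u j < ?u P2" | (g2) "?u P2 < ?u j"
    using nz by linarith
  thus ?thesis
  proof cases
    case g0
    show ?thesis
      by (rule lemZ_gap0[OF assms(1-16,18,19)]) (use g0 nz assms(25) in auto)
  next
    case g1
    have o: "0 < fd m P1 j" "fd m P1 j < fd m P1 P2" "fd m P1 P2 < fd m P1 P0"
      using g1 nz ul E[of P1 j] E[of P1 P2] E[of P1 P0] assms(3-6)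
        fd_le[of "?u P1" "?u j" m] fd_le[of "?u P1" "?u P2" m] fd_gt[of 0 "?u P1" m] by auto
    have "\<exists>t\<in>{P1,P2,P0}. \<forall>w<m. zn m k d t w \<longrightarrow> memc m (x j) (y j) j w"
      by (rule lemZ_gap0[OF assms(1,2,4,5,3,6,8,9,7,10,13,14,15,16,11,12,19,17) o])
    thus ?thesis by blast
  next
    case g2
    have o: "0 < fd m P2 j" "fd m P2 j < fd m P2 P0" "fd m P2 P0 < fd m P2 P1"
      using g2 nz ul E[of P2 j] E[of P2 P0] E[of P2 P1] assms(3-6,25)
        fd_le[of "?u P2" "?u j" m] fd_gt[of 0 "?u P2" m] fd_gt[of "?u P1" "?u P2" m] by auto
    have "\<exists>t\<in>{P2,P0,P1}. \<forall>w<m. zn m k d t w \<longrightarrow> memc m (x j) (y j) j w"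
      by (rule lemZ_gap0[OF assms(1,2,5,3,4,6,9,7,8,10,15,16,11,12,13,14,17,18) o])
    thus ?thesis by blast
  qed
qed

lemma memc_rf: "p < m \<Longrightarrow> z < m \<Longrightarrow> memc m x y p z \<longleftrightarrow> memc m y x (rf m p) (rf m z)"
  unfolding memc_def using fd_rf[of p m z] fd_rf[of z m p] by auto

lemma zn_rf: "m = 2*k+d \<Longrightarrow> p < m \<Longrightarrow> w < m \<Longrightarrow> zn m k d p w \<longleftrightarrow> zn m k d (rf m p) (rf m w)"
proof -
  assume a: "m = 2*k+d" "p < m" "w < m"
  show ?thesis
  proof (cases "p = w")
    case True thus ?thesis by (simp add: zn_def)
  next
    case False
    have "fd m (rf m p) (rf m w) = m - fd m p w" using fd_rf[OF a(2,3)] fd_swap[OF a(2,3) False] by simp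
    moreover have "fd m p w < m" using fd_lt a by blast
    ultimately show ?thesis unfolding zn_def using a(1) by auto
  qed
qed


lemma memc_self: "memc m x y p p" by (simp add: memc_def)

lemma lemZ:
  fixes x y :: "nat \<Rightarrow> nat"
  assumes "m = 2*k + d" "1 \<le> d" "c0 < m" "c1 < m" "c2 < m" "j < m"
    "x c0 + y c0 \<le> k" "x c1 + y c1 \<le> k" "x c2 + y c2 \<le> k" "x j + y j \<le> k"
    "\<not> memc m (x c0) (y c0) c0 c1" "\<not> memc m (x c1) (y c1) c1 c2" "\<not> memc m (x c2) (y c2) c2 c0"
    "memc m (x c1) (y c1) c1 c0" "memc m (x c2) (y c2) c2 c1" "memc m (x c0) (y c0) c0 c2"
    "memc m (x c0) (y c0) c0 j \<or> memc m (x j) (y j) j c0"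
    "memc m (x c1) (y c1) c1 j \<or> memc m (x j) (y j) j c1"
    "memc m (x c2) (y c2) c2 j \<or> memc m (x j) (y j) j c2"
    "j \<noteq> c0" "j \<noteq> c1" "j \<noteq> c2"
  shows "\<exists>t\<in>{c0,c1,c2}. \<forall>w<m. zn m k d t w \<longrightarrow> memc m (x j) (y j) j w"
proof -
  have d10: "c1 \<noteq> c0" using assms(11) memc_self by metis
  have d20: "c2 \<noteq> c0" using assms(13) memc_self by metis
  have d21: "c2 \<noteq> c1" using assms(12) memc_self by metis
  have ne: "fd m c0 c1 \<noteq> fd m c0 c2" using fd_inj[OF assms(4,5,3)] d21 by metis
  show ?thesis
  proof (cases "fd m c0 c2 < fd m c0 c1")
    case True
    have "\<exists>t\<in>{c0,c2,c1}. \<forall>w<m. zn m k d t w \<longrightarrow> memc m (x j) (y j) j w"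
      by (rule lemZ_Y[OF assms(1,2,3,5,4,6,7,9,8,10,16,11,15,13,14,12,17,19,18,20,22,21) d20 d10 True])
    thus ?thesis by blast
  next
    case False
    hence ord: "fd m c0 c1 < fd m c0 c2" using ne by linarith
    define x' where "x' = (\<lambda>q. y (rf m q))"
    define y' where "y' = (\<lambda>q. x (rf m q))"
    have xy: "\<And>c. c < m \<Longrightarrow> x' (rf m c) = y c \<and> y' (rf m c) = x c"
      unfolding x'_def y'_def using rf_rf by simp
    have M: "\<And>p z. p < m \<Longrightarrow> z < m \<Longrightarrow>
        memc m (x' (rf m p)) (y' (rf m p)) (rf m p) (rf m z) \<longleftrightarrow> memc m (x p) (y p) p z"
      using xy memc_rf by simp
    have R: "\<And>c. c < m \<Longrightarrow> rf m c < m" using rf_lt by blast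
    have K: "\<And>c. c < m \<Longrightarrow> x c + y c \<le> k \<Longrightarrow> x' (rf m c) + y' (rf m c) \<le> k"
      using xy by fastforce
    have o: "fd m (rf m c0) (rf m c2) < fd m (rf m c0) (rf m c1)"
      using fd_rf[OF assms(3,5)] fd_rf[OF assms(3,4)] fd_swap[OF assms(3,4) d10[symmetric]]
        fd_swap[OF assms(3,5) d20[symmetric]] ord by linarith
    have rne: "rf m j \<noteq> rf m c0" "rf m j \<noteq> rf m c2" "rf m j \<noteq> rf m c1"
      "rf m c2 \<noteq> rf m c0" "rf m c1 \<noteq> rf m c0"
      using rf_rf assms(3-6,20-22) d10 d20 by metis+
    have "\<exists>t\<in>{rf m c0, rf m c2, rf m c1}. \<forall>w<m. zn m k d t w \<longrightarrow>
        memc m (x' (rf m j)) (y' (rf m j)) (rf m j) w"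
      apply (rule lemZ_Y[OF assms(1,2) R[OF assms(3)] R[OF assms(5)] R[OF assms(4)] R[OF assms(6)]
         K[OF assms(3,7)] K[OF assms(5,9)] K[OF assms(4,8)] K[OF assms(6,10)]])
      using M[OF assms(3) assms(5)] M[OF assms(3) assms(4)] M[OF assms(5) assms(4)]
        M[OF assms(5) assms(3)] M[OF assms(4) assms(3)] M[OF assms(4) assms(5)]
        M[OF assms(3) assms(6)] M[OF assms(6) assms(3)] M[OF assms(5) assms(6)] M[OF assms(6) assms(5)]
        M[OF assms(4) assms(6)] M[OF assms(6) assms(4)]
        assms(11-19) rne o by simp_all
    then obtain c where c: "c \<in> {c0,c1,c2}"
      "\<forall>w<m. zn m k d (rf m c) w \<longrightarrow> memc m (x' (rf m j)) (y' (rf m j)) (rf m j) w" by blast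
    have cm: "c < m" using c(1) assms(3-5) by blast
    have "\<forall>w<m. zn m k d c w \<longrightarrow> memc m (x j) (y j) j w"
    proof (intro allI impI)
      fix w assume w: "w < m" "zn m k d c w"
      have "zn m k d (rf m c) (rf m w)" using zn_rf[OF assms(1) cm w(1)] w(2) by simp
      hence "memc m (x' (rf m j)) (y' (rf m j)) (rf m j) (rf m w)" using c(2) R[OF w(1)] by blast
      thus "memc m (x j) (y j) j w" using M[OF assms(6) w(1)] by simp
    qed
    thus ?thesis using c(1) by blast
  qed
qed


lemma fd_mod: "a < m \<Longrightarrow> t < m \<Longrightarrow> fd m a ((a + t) mod m) = t"
proof -
  assume a: "a < m" "t < m"
  show ?thesis
  proof (cases "a + t < m")
    case True thus ?thesis by (simp add: fd_def)
  next
    case False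
    hence "(a + t) mod m = (a + t - m) mod m" using le_mod_geq[of m "a+t"] by simp
    also have "\<dots> = a + t - m" using a by simp
    finally have "(a + t) mod m = a + t - m" .
    thus ?thesis using False a by (simp add: fd_def)
  qed
qed

lemma card_zone:
  assumes "m = 2*k + d" "t < m"
  shows "d - 1 \<le> card {w. w < m \<and> zn m k d t w}"
proof -
  let ?f = "\<lambda>s. (t + s) mod m"
  have inj: "inj_on ?f {k+1..<k+d}"
  proof (rule inj_onI)
    fix a b assume ab: "a \<in> {k+1..<k+d}" "b \<in> {k+1..<k+d}" "?f a = ?f b"
    have "a < m" "b < m" using ab assms by auto
    thus "a = b" using fd_mod[OF assms(2)] ab(3) by metis
  qed
  have sub: "?f ` {k+1..<k+d} \<subseteq> {w. w < m \<and> zn m k d t w}"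
  proof
    fix w assume "w \<in> ?f ` {k+1..<k+d}"
    then obtain s where s: "s \<in> {k+1..<k+d}" "w = ?f s" by blast
    have sm: "s < m" using s assms by auto
    have "fd m t w = s" using fd_mod[OF assms(2) sm] s by simp
    moreover have "w < m" using s(2) assms(2) by simp
    ultimately show "w \<in> {w. w < m \<and> zn m k d t w}" using s(1) by (auto simp: zn_def)
  qed
  have "card (?f ` {k+1..<k+d}) = d - 1" using card_image[OF inj] by simp
  moreover have "finite {w. w < m \<and> zn m k d t w}" by simp
  ultimately show ?thesis using card_mono[OF _ sub] by simp
qed

lemma memc_close: "memc m x y p q \<Longrightarrow> x + y \<le> k \<Longrightarrow> fd m q p \<le> k \<or> fd m p q \<le> k"
  unfolding memc_def by auto

lemma zone_empty:
  assumes "m = 2*k + d" "p < m" "q < m" "q = p \<or> memc m xp yp p q \<or> memc m xq yq q p"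
    "xp + yp \<le> k" "xq + yq \<le> k"
  shows "\<not> zn m k d p q"
proof
  assume z: "zn m k d p q"
  hence "q \<noteq> p" unfolding zn_def by auto
  hence "fd m p q \<le> k \<or> fd m q p \<le> k" using assms(4-6) memc_close by blast
  moreover have "fd m p q + fd m q p = m" using fd_swap[OF assms(2,3)] \<open>q \<noteq> p\<close> by auto
  ultimately show False using z assms(1) unfolding zn_def by linarith
qed


definition Iset :: "nat \<Rightarrow> (nat \<Rightarrow> nat) \<Rightarrow> (nat \<Rightarrow> nat) \<Rightarrow> nat \<Rightarrow> nat set" where
  "Iset m x y j = {z. z < m \<and> memc m (x j) (y j) j z}"

lemma Iset_split:
  assumes "J \<subseteq> {..<m}" "j \<in> J"
  shows "card (Iset m x y j) = 1 + card (Iset m x y j \<inter> J - {j}) + card (Iset m x y j - J)"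
proof -
  have jm: "j < m" using assms by auto
  have eq: "Iset m x y j = {j} \<union> (Iset m x y j \<inter> J - {j}) \<union> (Iset m x y j - J)"
    using assms jm memc_self unfolding Iset_def by auto
  have fin: "finite (Iset m x y j)" unfolding Iset_def by simp
  have "card ({j} \<union> (Iset m x y j \<inter> J - {j}) \<union> (Iset m x y j - J)) =
     card ({j} \<union> (Iset m x y j \<inter> J - {j})) + card (Iset m x y j - J)"
    by (rule card_Un_disjoint) (use fin assms in auto)
  also have "card ({j} \<union> (Iset m x y j \<inter> J - {j})) = 1 + card (Iset m x y j \<inter> J - {j})"
    by (subst card_Un_disjoint) (use fin in auto)
  finally show ?thesis using eq by simp
qed

lemma pair_count:
  assumes "finite J" "\<forall>a\<in>J. \<forall>b\<in>J. a \<noteq> b \<longrightarrow> b \<in> I a \<or> a \<in> I b"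
  shows "card J * (card J - 1) \<le> 2 * (\<Sum>a\<in>J. card (I a \<inter> J - {a}))"
proof -
  let ?P = "Sigma J (\<lambda>a. I a \<inter> J - {a})"
  let ?O = "{p \<in> J \<times> J. fst p \<noteq> snd p}"
  have cP: "card ?P = (\<Sum>a\<in>J. card (I a \<inter> J - {a}))"
    using assms(1) by (subst card_SigmaI) auto
  have finP: "finite ?P" using assms(1) by simp
  have sub: "?O \<subseteq> ?P \<union> (\<lambda>(a,b). (b,a)) ` ?P"
  proof
    fix p assume p: "p \<in> ?O"
    then obtain a b where ab: "p = (a,b)" "a \<in> J" "b \<in> J" "a \<noteq> b" by auto
    show "p \<in> ?P \<union> (\<lambda>(a,b). (b,a)) ` ?P"
    proof (cases "b \<in> I a")
      case True thus ?thesis using ab by auto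
    next
      case False
      hence "(b,a) \<in> ?P" using ab assms(2) by auto
      hence "(\<lambda>(a,b). (b,a)) (b,a) \<in> (\<lambda>(a,b). (b,a)) ` ?P" by (rule imageI)
      thus ?thesis using ab by simp
    qed
  qed
  have "card ?O \<le> card (?P \<union> (\<lambda>(a,b). (b,a)) ` ?P)"
    by (rule card_mono[OF _ sub]) (use finP in simp)
  also have "\<dots> \<le> card ?P + card ((\<lambda>(a,b). (b,a)) ` ?P)" by (rule card_Un_le)
  also have "\<dots> \<le> 2 * card ?P" using card_image_le[OF finP, of "\<lambda>(a,b). (b,a)"] by simp
  finally have c1: "card ?O \<le> 2 * card ?P" .
  have "?O = J \<times> J - (\<lambda>a. (a,a)) ` J" by auto
  hence "card ?O = card (J \<times> J) - card ((\<lambda>a. (a,a)) ` J)"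
    using card_Diff_subset[of "(\<lambda>a. (a,a)) ` J" "J \<times> J"] assms(1) by auto
  moreover have "card ((\<lambda>a. (a,a)) ` J) = card J" by (rule card_image) (auto simp: inj_on_def)
  moreover have "card (J \<times> J) = card J * card J" by (simp add: card_cartesian_product)
  ultimately have "card ?O = card J * (card J - 1)" by (simp add: diff_mult_distrib2)
  thus ?thesis using c1 cP by simp
qed


lemma count_main:
  fixes x y :: "nat \<Rightarrow> nat"
  assumes "m = 2*k + d" "1 \<le> d" "finite J" "J \<subseteq> {..<m}" "c0 \<in> J" "c1 \<in> J" "c2 \<in> J"
    "\<forall>j\<in>J. x j + y j \<le> k"
    "\<forall>a\<in>J. \<forall>b\<in>J. a \<noteq> b \<longrightarrow> memc m (x a) (y a) a b \<or> memc m (x b) (y b) b a"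
    "\<not> memc m (x c0) (y c0) c0 c1" "\<not> memc m (x c1) (y c1) c1 c2" "\<not> memc m (x c2) (y c2) c2 c0"
    "memc m (x c1) (y c1) c1 c0" "memc m (x c2) (y c2) c2 c1" "memc m (x c0) (y c0) c0 c2"
  shows "2 * (m - card J) + 2 * ((card J - 3) * (d - 1)) + card J * (card J - 1) + 2 * card J
     \<le> 2 * (\<Sum>j\<in>J. card (Iset m x y j))"
proof -
  let ?A = "\<lambda>j. card (Iset m x y j \<inter> J - {j})"
  let ?B = "\<lambda>j. card (Iset m x y j - J)"
  let ?N = "card J"
  have lt: "c0 < m" "c1 < m" "c2 < m" using assms(4-7) by auto
  have kc: "x c0 + y c0 \<le> k" "x c1 + y c1 \<le> k" "x c2 + y c2 \<le> k" using assms(5-8) by auto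
  have d10: "c1 \<noteq> c0" using assms(10) memc_self by metis
  have d20: "c2 \<noteq> c0" using assms(12) memc_self by metis
  have d21: "c2 \<noteq> c1" using assms(11) memc_self by metis
  have S1: "(\<Sum>j\<in>J. card (Iset m x y j)) = ?N + sum ?A J + sum ?B J"
  proof -
    have "(\<Sum>j\<in>J. card (Iset m x y j)) = (\<Sum>j\<in>J. 1 + ?A j + ?B j)"
      using Iset_split[OF assms(4)] by (intro sum.cong) auto
    also have "\<dots> = (\<Sum>j\<in>J. 1) + sum ?A J + sum ?B J" by (simp only: sum.distrib)
    finally show ?thesis by simp
  qed
  have S2: "?N * (?N - 1) \<le> 2 * sum ?A J"
  proof (rule pair_count[OF assms(3)])
    show "\<forall>a\<in>J. \<forall>b\<in>J. a \<noteq> b \<longrightarrow> b \<in> Iset m x y a \<or> a \<in> Iset m x y b"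
      using assms(4,9) unfolding Iset_def by blast
  qed
  let ?C = "{c0,c1,c2}"
  have CJ: "?C \<subseteq> J" using assms(5-7) by auto
  have cC: "card ?C = 3" using d10 d20 d21 by auto
  have split: "sum ?B J = sum ?B (J - ?C) + sum ?B ?C"
    by (rule sum.subset_diff[OF CJ assms(3)])
  have covers: "\<forall>z<m. memc m (x c0) (y c0) c0 z \<or> memc m (x c1) (y c1) c1 z \<or> memc m (x c2) (y c2) c2 z"
  proof (intro allI impI)
    fix z assume z: "z < m"
    have k2: "2*k < m" using assms(1,2) by linarith
    show "memc m (x c0) (y c0) c0 z \<or> memc m (x c1) (y c1) c1 z \<or> memc m (x c2) (y c2) c2 z"
      by (rule cover[OF k2 z lt lt(2,3,1) kc memc_self assms(13) assms(12) memc_self assms(14) assms(10)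
          assms(15) memc_self assms(11)])
  qed
  have UC: "(\<Union>c\<in>?C. Iset m x y c - J) = {..<m} - J"
    using covers unfolding Iset_def by auto
  have "card ({..<m} - J) = m - ?N" using card_Diff_subset[OF assms(3,4)] by simp
  hence BC: "m - ?N \<le> sum ?B ?C"
    using card_UN_le[of ?C "\<lambda>c. Iset m x y c - J"] UC by simp
  have BJ: "\<And>j. j \<in> J - ?C \<Longrightarrow> d - 1 \<le> ?B j"
  proof -
    fix j assume j: "j \<in> J - ?C"
    have jm: "j < m" using j assms(4) by auto
    have kj: "x j + y j \<le> k" using j assms(8) by auto
    have cmp: "\<And>c. c \<in> ?C \<Longrightarrow> memc m (x c) (y c) c j \<or> memc m (x j) (y j) j c"
      using j CJ assms(9) by blast
    obtain t where t: "t \<in> ?C" "\<forall>w<m. zn m k d t w \<longrightarrow> memc m (x j) (y j) j w"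
      using lemZ[OF assms(1,2) lt jm kc kj assms(10-15) cmp cmp cmp] j by blast
    have tm: "t < m" "t \<in> J" "x t + y t \<le> k" using t(1) lt CJ assms(8) by auto
    have sub: "{w. w < m \<and> zn m k d t w} \<subseteq> Iset m x y j - J"
    proof
      fix w assume w: "w \<in> {w. w < m \<and> zn m k d t w}"
      have "w \<notin> J"
      proof
        assume wJ: "w \<in> J"
        have "w = t \<or> memc m (x t) (y t) t w \<or> memc m (x w) (y w) w t" using assms(9) wJ tm(2) by blast
        thus False using zone_empty[OF assms(1) tm(1) _ _ tm(3), of w "x w" "y w"] w wJ assms(8) by auto
      qed
      thus "w \<in> Iset m x y j - J" using w t(2) unfolding Iset_def by auto
    qed
    have "d - 1 \<le> card {w. w < m \<and> zn m k d t w}" by (rule card_zone[OF assms(1) tm(1)])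
    also have "\<dots> \<le> ?B j" by (rule card_mono[OF _ sub]) (simp add: Iset_def)
    finally show "d - 1 \<le> ?B j" .
  qed
  have "card (J - ?C) * (d - 1) \<le> sum ?B (J - ?C)"
    using sum_bounded_below[of "J - ?C" "d - 1" ?B] BJ by simp
  moreover have "card (J - ?C) = ?N - 3" using card_Diff_subset[OF _ CJ] cC by simp
  ultimately have S3: "(m - ?N) + (?N - 3) * (d - 1) \<le> sum ?B J" using split BC by simp
  show ?thesis using S1 S2 S3 by linarith
qed


lemma ex_mod_iff: "a < m \<Longrightarrow> b < m \<Longrightarrow> k < m \<Longrightarrow>
   (\<exists>t\<le>k. b = (a + t) mod m) \<longleftrightarrow> fd m a b \<le> k"
proof
  assume a: "a < m" "b < m" "k < m"
  { assume "\<exists>t\<le>k. b = (a + t) mod m"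
    then obtain t where t: "t \<le> k" "b = (a + t) mod m" by blast
    thus "fd m a b \<le> k" using fd_mod[of a m t] a by simp }
  { assume "fd m a b \<le> k" thus "\<exists>t\<le>k. b = (a + t) mod m"
      using mod_fd[OF a(1,2)] by metis }
qed

lemma less_AB: assumes "k < n"
  shows "crown_less n k (CA i) (CB j) \<longleftrightarrow> i < n + k \<and> j < n + k \<and> k < fd (n+k) i j"
proof
  assume h: "crown_less n k (CA i) (CB j)"
  hence ij: "i < n + k" "j < n + k" "\<not> (\<exists>t\<le>k. j = (i + t) mod (n + k))"
    unfolding crown_less_def by auto
  have "k < n + k" using assms by simp
  thus "i < n + k \<and> j < n + k \<and> k < fd (n+k) i j" using ij ex_mod_iff[OF ij(1,2)] by auto
next
  assume h: "i < n + k \<and> j < n + k \<and> k < fd (n+k) i j"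
  have "k < n + k" using assms by simp
  hence "\<not> (\<exists>t\<le>k. j = (i + t) mod (n + k))" using h ex_mod_iff[of i "n+k" j k] by auto
  thus "crown_less n k (CA i) (CB j)" using h unfolding crown_less_def by auto
qed

lemma less_nonAB: "crown_less n k x y \<Longrightarrow> \<exists>i j. x = CA i \<and> y = CB j"
  unfolding crown_less_def by auto

lemma Inc_iff: "k < n \<Longrightarrow> p \<in> crown_Inc n k \<longleftrightarrow>
   (\<exists>i j. p = (CA i, CB j) \<and> i < n + k \<and> j < n + k \<and> fd (n+k) i j \<le> k)"
  unfolding crown_Inc_def using less_AB[of k n] by auto


lemma fd_add: "a < m \<Longrightarrow> b < m \<Longrightarrow> c < m \<Longrightarrow>
   fd m a c = (if fd m a b + fd m b c < m then fd m a b + fd m b c else fd m a b + fd m b c - m)"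
  unfolding fd_def by (cases "a \<le> b"; cases "b \<le> c"; cases "a \<le> c"; simp)

definition Jof :: "(cel \<times> cel) set \<Rightarrow> nat set" where "Jof S = {j. \<exists>i. (CA i, CB j) \<in> S}"
definition Sof :: "(cel \<times> cel) set \<Rightarrow> nat \<Rightarrow> nat set" where "Sof S j = {i. (CA i, CB j) \<in> S}"
definition Dof :: "nat \<Rightarrow> (cel \<times> cel) set \<Rightarrow> nat \<Rightarrow> nat set" where
  "Dof m S j = (\<lambda>i. fd m i j) ` Sof S j"
definition xof :: "nat \<Rightarrow> (cel \<times> cel) set \<Rightarrow> nat \<Rightarrow> nat" where "xof m S j = Min (Dof m S j)"
definition yof :: "nat \<Rightarrow> nat \<Rightarrow> (cel \<times> cel) set \<Rightarrow> nat \<Rightarrow> nat" where "yof m k S j = k - Max (Dof m S j)"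

lemma S_mem: "k < n \<Longrightarrow> S \<subseteq> crown_Inc n k \<Longrightarrow> (CA i, CB j) \<in> S \<Longrightarrow>
   i < n + k \<and> j < n + k \<and> fd (n+k) i j \<le> k"
proof -
  assume a: "k < n" "S \<subseteq> crown_Inc n k" "(CA i, CB j) \<in> S"
  hence "(CA i, CB j) \<in> crown_Inc n k" by blast
  then obtain i' j' where "(CA i, CB j) = (CA i', CB j')" "i' < n + k" "j' < n + k" "fd (n+k) i' j' \<le> k"
    using Inc_iff[OF a(1)] by blast
  thus ?thesis by simp
qed

lemma S_fin:
  assumes "k < n" "S \<subseteq> crown_Inc n k"
  shows "Jof S \<subseteq> {..<n+k}" "finite (Jof S)" "Sof S j \<subseteq> {..<n+k}" "finite (Sof S j)"
    "j \<in> Jof S \<Longrightarrow> Sof S j \<noteq> {}"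
proof -
  show a: "Jof S \<subseteq> {..<n+k}" unfolding Jof_def using S_mem[OF assms] by auto
  thus "finite (Jof S)" using finite_subset by blast
  show b: "Sof S j \<subseteq> {..<n+k}" unfolding Sof_def using S_mem[OF assms] by auto
  thus "finite (Sof S j)" using finite_subset by blast
  show "j \<in> Jof S \<Longrightarrow> Sof S j \<noteq> {}" unfolding Jof_def Sof_def by auto
qed

lemma D_facts:
  assumes "k < n" "S \<subseteq> crown_Inc n k" "j \<in> Jof S"
  shows "finite (Dof (n+k) S j)" "Dof (n+k) S j \<noteq> {}"
    "\<And>i. i \<in> Sof S j \<Longrightarrow> xof (n+k) S j \<le> fd (n+k) i j \<and> fd (n+k) i j \<le> Max (Dof (n+k) S j)"
    "Max (Dof (n+k) S j) \<le> k" "\<exists>i\<in>Sof S j. fd (n+k) i j = xof (n+k) S j"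
    "\<exists>i\<in>Sof S j. fd (n+k) i j = Max (Dof (n+k) S j)"
proof -
  show f: "finite (Dof (n+k) S j)" unfolding Dof_def using S_fin[OF assms(1,2)] by simp
  show ne: "Dof (n+k) S j \<noteq> {}" unfolding Dof_def using S_fin[OF assms(1,2)] assms(3) by simp
  show "\<And>i. i \<in> Sof S j \<Longrightarrow> xof (n+k) S j \<le> fd (n+k) i j \<and> fd (n+k) i j \<le> Max (Dof (n+k) S j)"
    unfolding xof_def using f by (auto simp: Dof_def)
  have "\<forall>d\<in>Dof (n+k) S j. d \<le> k" unfolding Dof_def Sof_def using S_mem[OF assms(1,2)] by auto
  thus "Max (Dof (n+k) S j) \<le> k" using f ne by simp
  show "\<exists>i\<in>Sof S j. fd (n+k) i j = xof (n+k) S j"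
    using Min_in[OF f ne] unfolding xof_def Dof_def by auto
  show "\<exists>i\<in>Sof S j. fd (n+k) i j = Max (Dof (n+k) S j)"
    using Max_in[OF f ne] unfolding Dof_def by auto
qed

lemma xy_le: "k < n \<Longrightarrow> S \<subseteq> crown_Inc n k \<Longrightarrow> j \<in> Jof S \<Longrightarrow> xof (n+k) S j + yof (n+k) k S j \<le> k"
  using D_facts[of k n S j] unfolding yof_def by fastforce

lemma char_ar1: "m - f \<le> X \<or> f \<le> k - M \<Longrightarrow> X \<le> D \<Longrightarrow> D \<le> M \<Longrightarrow> M \<le> k \<Longrightarrow> f < m \<Longrightarrow>
  k < m \<Longrightarrow> (if D + f < m then D + f else D + f - m) \<le> (k::nat)"
  by (cases "D + f < m") auto

lemma char_ar2: "(if X + f < m then X + f else X + f - m) \<le> k \<Longrightarrow> (if M + f < m then M + f else M + f - m) \<le> k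
  \<Longrightarrow> X \<le> M \<Longrightarrow> M \<le> k \<Longrightarrow> f < m \<Longrightarrow> 2 * k < (m::nat) \<Longrightarrow> m - f \<le> X \<or> f \<le> k - M"
  by (cases "X + f < m"; cases "M + f < m") auto

lemma char:
  assumes "k < n" "S \<subseteq> crown_Inc n k" "j \<in> Jof S" "z < n + k"
  shows "memc (n+k) (xof (n+k) S j) (yof (n+k) k S j) j z \<longleftrightarrow> (\<forall>i\<in>Sof S j. fd (n+k) i z \<le> k)"
proof -
  let ?m = "n + k"
  let ?X = "xof ?m S j" let ?M = "Max (Dof ?m S j)"
  have jm: "j < ?m" using S_fin(1)[OF assms(1,2)] assms(3) by auto
  have km: "k < ?m" using assms(1) by simp
  have Di: "\<And>i. i \<in> Sof S j \<Longrightarrow> ?X \<le> fd ?m i j \<and> fd ?m i j \<le> ?M \<and> i < ?m"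
    using D_facts(3)[OF assms(1-3)] S_fin(3)[OF assms(1,2)] by auto
  have Mk: "?M \<le> k" by (rule D_facts(4)[OF assms(1-3)])
  obtain i0 where i0: "i0 \<in> Sof S j" "fd ?m i0 j = ?X" using D_facts(5)[OF assms(1-3)] by blast
  obtain i1 where i1: "i1 \<in> Sof S j" "fd ?m i1 j = ?M" using D_facts(6)[OF assms(1-3)] by blast
  have add: "\<And>i. i < ?m \<Longrightarrow> fd ?m i z = (if fd ?m i j + fd ?m j z < ?m then fd ?m i j + fd ?m j z
      else fd ?m i j + fd ?m j z - ?m)" using fd_add jm assms(4) by blast
  have fz: "fd ?m j z < ?m" using fd_lt jm assms(4) by blast
  show ?thesis
  proof (cases "z = j")
    case True
    thus ?thesis using memc_self[of ?m ?X "yof ?m k S j" j] Di Mk by force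
  next
    case False
    have sw: "fd ?m z j = ?m - fd ?m j z" using fd_swap[OF jm assms(4)] False by auto
    show ?thesis
    proof
      assume h: "memc ?m ?X (yof ?m k S j) j z"
      show "\<forall>i\<in>Sof S j. fd ?m i z \<le> k"
      proof
        fix i assume i: "i \<in> Sof S j"
        note Dii = Di[OF i]
        from h have "fd ?m z j \<le> ?X \<or> fd ?m j z \<le> k - ?M" unfolding memc_def yof_def .
        hence "?m - fd ?m j z \<le> ?X \<or> fd ?m j z \<le> k - ?M" using sw by simp
        from char_ar1[OF this _ _ Mk fz km, of "fd ?m i j"] show "fd ?m i z \<le> k"
          using add[of i] Dii by simp
      qed
    next
      assume h: "\<forall>i\<in>Sof S j. fd ?m i z \<le> k"
      have h0: "fd ?m i0 z \<le> k" "fd ?m i1 z \<le> k" using h i0(1) i1(1) by auto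
      have k2: "2 * k < ?m" using assms(1) by simp
      have e0: "fd ?m i0 z = (if ?X + fd ?m j z < ?m then ?X + fd ?m j z else ?X + fd ?m j z - ?m)"
        using add[of i0] i0(2) Di[OF i0(1)] by simp
      have e1: "fd ?m i1 z = (if ?M + fd ?m j z < ?m then ?M + fd ?m j z else ?M + fd ?m j z - ?m)"
        using add[of i1] i1(2) Di[OF i1(1)] by simp
      have XM: "?X \<le> ?M" using Di[OF i0(1)] by simp
      have "?m - fd ?m j z \<le> ?X \<or> fd ?m j z \<le> k - ?M"
        by (rule char_ar2[OF h0(1)[unfolded e0] h0(2)[unfolded e1] XM Mk fz k2])
      hence "fd ?m z j \<le> ?X \<or> fd ?m j z \<le> k - ?M" using sw by simp
      thus "memc ?m ?X (yof ?m k S j) j z" unfolding memc_def yof_def .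
    qed
  qed
qed


lemma fd_inj2: "a < m \<Longrightarrow> b < m \<Longrightarrow> c < m \<Longrightarrow> fd m a c = fd m b c \<Longrightarrow> a = b"
  unfolding fd_def by (cases "a \<le> c"; cases "b \<le> c"; simp)

lemma weight:
  assumes "k < n" "S \<subseteq> crown_Inc n k" "j \<in> Jof S"
  shows "card (Sof S j) + card (Iset (n+k) (xof (n+k) S) (yof (n+k) k S) j) \<le> k + 2"
proof -
  let ?m = "n + k"
  let ?X = "xof ?m S j" let ?M = "Max (Dof ?m S j)"
  have jm: "j < ?m" using S_fin(1)[OF assms(1,2)] assms(3) by auto
  have Di: "\<And>i. i \<in> Sof S j \<Longrightarrow> ?X \<le> fd ?m i j \<and> fd ?m i j \<le> ?M"
    using D_facts(3)[OF assms(1-3)] by auto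
  have Mk: "?M \<le> k" by (rule D_facts(4)[OF assms(1-3)])
  obtain i0 where i0: "i0 \<in> Sof S j" using S_fin(5)[OF assms(1,2,3)] by blast
  have XM: "?X \<le> ?M" using Di[OF i0] by simp
  have c1: "card (Sof S j) \<le> card {?X..?M}"
  proof (rule card_inj_on_le)
    show "inj_on (\<lambda>i. fd ?m i j) (Sof S j)"
    proof (rule inj_onI)
      fix a b assume ab: "a \<in> Sof S j" "b \<in> Sof S j" "fd ?m a j = fd ?m b j"
      have "a < ?m" "b < ?m" using ab(1,2) S_fin(3)[OF assms(1,2)] by auto
      thus "a = b" using fd_inj2 jm ab(3) by blast
    qed
    show "(\<lambda>i. fd ?m i j) ` Sof S j \<subseteq> {?X..?M}" using Di by auto
  qed simp
  let ?A = "{z. z < ?m \<and> fd ?m z j \<le> ?X}"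
  let ?B = "{z. z < ?m \<and> fd ?m j z \<le> k - ?M}"
  have cA: "card ?A \<le> card {..?X}"
  proof (rule card_inj_on_le[where f="\<lambda>z. fd ?m z j"])
    show "inj_on (\<lambda>z. fd ?m z j) ?A"
    proof (rule inj_onI)
      fix a b assume ab: "a \<in> ?A" "b \<in> ?A" "fd ?m a j = fd ?m b j"
      thus "a = b" using fd_inj2 jm by blast
    qed
  qed auto
  have cB: "card ?B \<le> card {..k - ?M}"
  proof (rule card_inj_on_le[where f="\<lambda>z. fd ?m j z"])
    show "inj_on (\<lambda>z. fd ?m j z) ?B"
    proof (rule inj_onI)
      fix a b assume ab: "a \<in> ?B" "b \<in> ?B" "fd ?m j a = fd ?m j b"
      thus "a = b" using fd_inj jm by blast
    qed
  qed auto
  have AB: "j \<in> ?A \<inter> ?B" using jm by simp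
  have "card (?A \<inter> ?B) \<ge> 1" using AB card_0_eq[of "?A \<inter> ?B"] by fastforce
  moreover have "card (?A \<union> ?B) + card (?A \<inter> ?B) = card ?A + card ?B" using card_Un_Int[of ?A ?B] by simp
  moreover have "Iset ?m (xof ?m S) (yof ?m k S) j = ?A \<union> ?B" unfolding Iset_def memc_def yof_def by auto
  ultimately have "card (Iset ?m (xof ?m S) (yof ?m k S) j) \<le> ?X + 1 + (k - ?M + 1) - 1"
    using cA cB by simp
  thus ?thesis using c1 XM Mk by simp
qed

lemma compat:
  assumes "k < n" "S \<subseteq> crown_Inc n k" "crown_independent n k S" "a \<in> Jof S" "b \<in> Jof S" "a \<noteq> b"
  shows "memc (n+k) (xof (n+k) S a) (yof (n+k) k S a) a b \<or> memc (n+k) (xof (n+k) S b) (yof (n+k) k S b) b a"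
proof (rule ccontr)
  assume h: "\<not> ?thesis"
  have am: "a < n + k" "b < n + k" using S_fin(1)[OF assms(1,2)] assms(4,5) by auto
  obtain i where i: "i \<in> Sof S a" "\<not> fd (n+k) i b \<le> k" using h char[OF assms(1,2,4) am(2)] by blast
  obtain i' where i': "i' \<in> Sof S b" "\<not> fd (n+k) i' a \<le> k" using h char[OF assms(1,2,5) am(1)] by blast
  have im: "i < n + k" "i' < n + k" using S_fin(3)[OF assms(1,2)] i(1) i'(1) by auto
  have "crown_adj n k (CA i, CB a) (CA i', CB b)"
    unfolding crown_adj_def using less_AB[OF assms(1)] im am i(2) i'(2) by simp
  moreover have "(CA i, CB a) \<in> S" "(CA i', CB b) \<in> S" using i(1) i'(1) unfolding Sof_def by auto
  ultimately show False using assms(3) unfolding crown_independent_def by blast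
qed

lemma card_S:
  assumes "k < n" "S \<subseteq> crown_Inc n k"
  shows "card S = (\<Sum>j\<in>Jof S. card (Sof S j))"
proof -
  have eq: "S = (\<lambda>(j,i). (CA i, CB j)) ` (Sigma (Jof S) (Sof S))"
  proof
    show "S \<subseteq> (\<lambda>(j,i). (CA i, CB j)) ` (Sigma (Jof S) (Sof S))"
    proof
      fix p assume p: "p \<in> S"
      then obtain i j where ij: "p = (CA i, CB j)" using assms(2) Inc_iff[OF assms(1)] by blast
      hence "(j,i) \<in> Sigma (Jof S) (Sof S)" using p unfolding Jof_def Sof_def by auto
      thus "p \<in> (\<lambda>(j,i). (CA i, CB j)) ` (Sigma (Jof S) (Sof S))" using ij by force
    qed
    show "(\<lambda>(j,i). (CA i, CB j)) ` (Sigma (Jof S) (Sof S)) \<subseteq> S" unfolding Jof_def Sof_def by auto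
  qed
  have inj: "inj_on (\<lambda>(j,i). (CA i, CB j)) (Sigma (Jof S) (Sof S))" by (auto simp: inj_on_def)
  have "card S = card (Sigma (Jof S) (Sof S))" using eq card_image[OF inj] by simp
  also have "\<dots> = (\<Sum>j\<in>Jof S. card (Sof S j))"
    using S_fin(2,4)[OF assms(1,2)] by simp
  finally show ?thesis .
qed


lemma topo:
  assumes "finite A" "R \<subseteq> A \<times> A" "acyclic R"
  shows "\<exists>f::'a \<Rightarrow> nat. inj_on f A \<and> (\<forall>(a,b)\<in>R. f a < f b)"
  using assms
proof (induction A arbitrary: R rule: finite_psubset_induct)
  case (psubset A)
  show ?case
  proof (cases "A = {}")
    case True
    thus ?thesis using psubset.prems by auto
  next
    case False
    then obtain a0 where a0: "a0 \<in> A" by blast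
    have finR: "finite R" using psubset.prems(1) psubset.hyps(1) finite_subset by blast
    have wf: "wf (R\<inverse>)" by (rule finite_acyclic_wf_converse[OF finR psubset.prems(2)])
    obtain z where z: "z \<in> A" "\<And>y. (y, z) \<in> R\<inverse> \<Longrightarrow> y \<notin> A" using wfE_min[OF wf a0] by blast
    have zmax: "\<And>y. (z, y) \<notin> R" using z(2) psubset.prems(1) by blast
    let ?B = "A - {z}"
    let ?R = "R \<inter> (?B \<times> ?B)"
    have "?B \<subset> A" using z(1) by blast
    moreover have "?R \<subseteq> ?B \<times> ?B" by blast
    moreover have "acyclic ?R" using acyclic_subset[OF psubset.prems(2)] by blast
    ultimately obtain g :: "'a \<Rightarrow> nat" where g: "inj_on g ?B" "\<forall>(a,b)\<in>?R. g a < g b"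
      using psubset.IH by blast
    define f where "f = (\<lambda>x. if x = z then Suc (Max (insert 0 (g ` ?B))) else g x)"
    have finB: "finite (g ` ?B)" using psubset.hyps(1) by simp
    have big: "\<And>x. x \<in> ?B \<Longrightarrow> g x < f z"
    proof -
      fix x assume "x \<in> ?B"
      hence "g x \<le> Max (insert 0 (g ` ?B))" using finB by simp
      thus "g x < f z" unfolding f_def by simp
    qed
    have "inj_on f A"
    proof (rule inj_onI)
      fix a b assume ab: "a \<in> A" "b \<in> A" "f a = f b"
      show "a = b"
      proof (cases "a = z"; cases "b = z")
        assume "a = z" "b = z" thus ?thesis by simp
      next
        assume h: "a = z" "b \<noteq> z"
        hence "g b < f z" using big ab(2) by simp
        thus ?thesis using ab(3) h unfolding f_def by simp
      next
        assume h: "a \<noteq> z" "b = z"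
        hence "g a < f z" using big ab(1) by simp
        thus ?thesis using ab(3) h unfolding f_def by simp
      next
        assume h: "a \<noteq> z" "b \<noteq> z"
        thus ?thesis using ab g(1) unfolding f_def inj_on_def by auto
      qed
    qed
    moreover have "\<forall>(a,b)\<in>R. f a < f b"
    proof (clarify)
      fix a b assume ab: "(a,b) \<in> R"
      have ab2: "a \<in> A" "b \<in> A" using ab psubset.prems(1) by auto
      have az: "a \<noteq> z" using zmax ab by blast
      show "f a < f b"
      proof (cases "b = z")
        case True thus ?thesis using big az ab2 unfolding f_def by simp
      next
        case False thus ?thesis using az ab ab2 g(2) unfolding f_def by auto
      qed
    qed
    ultimately show ?thesis by blast
  qed
qed


lemma key_linear:
  fixes key :: "'a \<Rightarrow> nat"
  assumes "inj_on key A"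
  shows "linear_order_on A {(u,v). u \<in> A \<and> v \<in> A \<and> key u \<le> key v}"
  unfolding linear_order_on_def partial_order_on_def preorder_on_def refl_on_def
    antisym_on_def trans_on_def total_on_def
  using assms by (auto simp: inj_on_def)

lemma block_eq: "a < (m::nat) \<Longrightarrow> b < m \<Longrightarrow> p*m + a = q*m + b \<Longrightarrow> p = q \<and> a = b"
proof -
  assume h: "a < m" "b < m" "p*m + a = q*m + b"
  have e1: "(p*m + a) div m = p" using h(1) by simp
  have e2: "(q*m + b) div m = q" using h(2) by simp
  have "p = q" using e1 e2 h(3) by simp
  thus ?thesis using h(3) by simp
qed

lemma block_lt: "a < (m::nat) \<Longrightarrow> p < q \<Longrightarrow> p*m + a < q*m + b"
proof -
  assume h: "a < m" "p < q"
  have "p*m + a < (p+1)*m" using h by simp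
  also have "(p+1)*m \<le> q*m" using mult_le_mono1[of "p+1" q m] h by linarith
  finally show ?thesis by simp
qed

definition Rof :: "nat \<Rightarrow> nat \<Rightarrow> (cel \<times> cel) set \<Rightarrow> (nat \<times> nat) set" where
  "Rof n k S = {(j, j'). j' < n + k \<and> (\<exists>i. (CA i, CB j) \<in> S \<and> k < fd (n+k) i j')}"

lemma rev_of_acyclic:
  assumes "k < n" "2 \<le> n" "S \<subseteq> crown_Inc n k" "acyclic (Rof n k S)"
  shows "crown_reversible n k S"
proof -
  let ?m = "n + k"
  let ?R = "Rof n k S"
  have Rsub: "?R \<subseteq> {..<?m} \<times> {..<?m}" unfolding Rof_def using S_mem[OF assms(1,3)] by auto
  obtain \<sigma> :: "nat \<Rightarrow> nat" where \<sigma>: "inj_on \<sigma> {..<?m}" "\<forall>(a,b)\<in>?R. \<sigma> a < \<sigma> b"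
    using topo[OF _ Rsub assms(4)] by blast
  define T where "T = (\<lambda>i. \<sigma> ` {j'. j' < ?m \<and> k < fd ?m i j'})"
  define \<tau> where "\<tau> = (\<lambda>i. Min (T i))"
  have Tne: "\<And>i. i < ?m \<Longrightarrow> T i \<noteq> {}"
  proof -
    fix i assume i: "i < ?m"
    have k1: "k + 1 < ?m" using assms(2) by simp
    have "fd ?m i ((i + (k+1)) mod ?m) = k + 1" by (rule fd_mod[OF i k1])
    moreover have "(i + (k+1)) mod ?m < ?m" using i mod_less_divisor[of ?m "i + (k+1)"] by linarith
    ultimately show "T i \<noteq> {}" unfolding T_def by force
  qed
  have Tfin: "\<And>i. finite (T i)" unfolding T_def by simp
  have tau_le: "\<And>i j'. i < ?m \<Longrightarrow> j' < ?m \<Longrightarrow> k < fd ?m i j' \<Longrightarrow> \<tau> i \<le> \<sigma> j'"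
    unfolding \<tau>_def T_def using Tfin unfolding T_def by (intro Min_le) auto
  have tau_in: "\<And>i. i < ?m \<Longrightarrow> \<exists>j'. j' < ?m \<and> k < fd ?m i j' \<and> \<tau> i = \<sigma> j'"
  proof -
    fix i assume i: "i < ?m"
    have "\<tau> i \<in> T i" unfolding \<tau>_def using Min_in[OF Tfin Tne[OF i]] .
    thus "\<exists>j'. j' < ?m \<and> k < fd ?m i j' \<and> \<tau> i = \<sigma> j'" unfolding T_def by auto
  qed
  define key where "key = (\<lambda>c. case c of CA i \<Rightarrow> (2 * \<tau> i) * ?m + i | CB j \<Rightarrow> (2 * \<sigma> j + 1) * ?m + j)"
  let ?G = "crown_ground n k"
  have Gm: "\<And>c. c \<in> ?G \<Longrightarrow> (\<exists>i. c = CA i \<and> i < ?m) \<or> (\<exists>j. c = CB j \<and> j < ?m)"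
    unfolding crown_ground_def by auto
  have inj: "inj_on key ?G"
  proof (rule inj_onI)
    fix u v assume uv: "u \<in> ?G" "v \<in> ?G" "key u = key v"
    show "u = v"
    proof (cases u)
      case (CA i)
      hence i: "i < ?m" using Gm[OF uv(1)] by auto
      show ?thesis
      proof (cases v)
        case (CA i')
        hence "i' < ?m" using Gm[OF uv(2)] by auto
        thus ?thesis using block_eq[OF i, of i' "2 * \<tau> i" "2 * \<tau> i'"] uv(3) CA \<open>u = CA i\<close>
          unfolding key_def by simp
      next
        case (CB j)
        hence jm: "j < ?m" using Gm[OF uv(2)] by auto
        have eq: "(2 * \<tau> i) * ?m + i = (2 * \<sigma> j + 1) * ?m + j"
          using uv(3) CB \<open>u = CA i\<close> unfolding key_def by simp
        have "2 * \<tau> i = 2 * \<sigma> j + 1" using block_eq[OF i jm eq] by blast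
        hence False by presburger
        thus ?thesis ..
      qed
    next
      case (CB j)
      hence j: "j < ?m" using Gm[OF uv(1)] by auto
      show ?thesis
      proof (cases v)
        case (CA i')
        hence im: "i' < ?m" using Gm[OF uv(2)] by auto
        have eq: "(2 * \<sigma> j + 1) * ?m + j = (2 * \<tau> i') * ?m + i'"
          using uv(3) CA \<open>u = CB j\<close> unfolding key_def by simp
        have "2 * \<sigma> j + 1 = 2 * \<tau> i'" using block_eq[OF j im eq] by blast
        hence False by presburger
        thus ?thesis ..
      next
        case (CB j')
        hence "j' < ?m" using Gm[OF uv(2)] by auto
        thus ?thesis using block_eq[OF j, of j' "2 * \<sigma> j + 1" "2 * \<sigma> j' + 1"] uv(3) CB \<open>u = CB j\<close>
          unfolding key_def by simp
      qed
    qed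
  qed
  define L where "L = {(u,v). u \<in> ?G \<and> v \<in> ?G \<and> key u \<le> key v}"
  have lin: "linear_order_on ?G L" unfolding L_def by (rule key_linear[OF inj])
  have ext: "\<forall>x y. crown_less n k x y \<longrightarrow> (x, y) \<in> L"
  proof (intro allI impI)
    fix x y assume xy: "crown_less n k x y"
    then obtain i j where ij: "x = CA i" "y = CB j" using less_nonAB by blast
    hence c: "i < ?m" "j < ?m" "k < fd ?m i j" using less_AB[OF assms(1)] xy by auto
    have "\<tau> i \<le> \<sigma> j" by (rule tau_le[OF c])
    hence "2 * \<tau> i < 2 * \<sigma> j + 1" by simp
    hence "key x < key y" using block_lt[OF c(1), of "2 * \<tau> i" "2 * \<sigma> j + 1" j] ij unfolding key_def by simp
    moreover have "x \<in> ?G" "y \<in> ?G" using ij c unfolding crown_ground_def by auto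
    ultimately show "(x, y) \<in> L" unfolding L_def by simp
  qed
  have revs: "\<forall>(a, b)\<in>S. (b, a) \<in> L"
  proof (clarify)
    fix a b assume ab: "(a, b) \<in> S"
    then obtain i j where ij: "a = CA i" "b = CB j" using assms(3) Inc_iff[OF assms(1)] by blast
    have c: "i < ?m" "j < ?m" using S_mem[OF assms(1,3)] ab ij by auto
    obtain j' where j': "j' < ?m" "k < fd ?m i j'" "\<tau> i = \<sigma> j'" using tau_in[OF c(1)] by blast
    have "(j, j') \<in> ?R" unfolding Rof_def using j' ab ij by auto
    hence "\<sigma> j < \<sigma> j'" using \<sigma>(2) by blast
    hence "2 * \<sigma> j + 1 < 2 * \<tau> i" using j'(3) by simp
    hence "key b < key a" using block_lt[OF c(2), of "2 * \<sigma> j + 1" "2 * \<tau> i" i] ij unfolding key_def by simp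
    moreover have "a \<in> ?G" "b \<in> ?G" using ij c unfolding crown_ground_def by auto
    ultimately show "(b, a) \<in> L" unfolding L_def by simp
  qed
  show ?thesis unfolding crown_reversible_def crown_linext_def using assms(3) lin ext revs by blast
qed


lemma relpow_walk: "(x, y) \<in> R ^^ n \<Longrightarrow> \<exists>c. c 0 = x \<and> c n = y \<and> (\<forall>i<n. (c i, c (Suc i)) \<in> R)"
proof (induction n arbitrary: y)
  case 0 thus ?case by auto
next
  case (Suc n)
  then obtain z where z: "(x, z) \<in> R ^^ n" "(z, y) \<in> R" by auto
  then obtain c where c: "c 0 = x" "c n = z" "\<forall>i<n. (c i, c (Suc i)) \<in> R" using Suc.IH by blast
  let ?c = "c(Suc n := y)"
  have "\<forall>i<Suc n. (?c i, ?c (Suc i)) \<in> R"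
  proof (intro allI impI)
    fix i assume "i < Suc n"
    thus "(?c i, ?c (Suc i)) \<in> R" using c z(2) by (cases "i = n") auto
  qed
  moreover have "?c 0 = x" "?c (Suc n) = y" using c(1) by auto
  ultimately show ?case by blast
qed

definition cyc :: "(nat \<times> nat) set \<Rightarrow> nat \<Rightarrow> bool" where
  "cyc R n \<longleftrightarrow> 0 < n \<and> (\<exists>c. c 0 = c n \<and> (\<forall>i<n. (c i, c (Suc i)) \<in> R))"

lemma cyc_of_not_acyclic: "\<not> acyclic R \<Longrightarrow> \<exists>n. cyc R n"
proof -
  assume "\<not> acyclic R"
  then obtain x where "(x, x) \<in> R\<^sup>+" unfolding acyclic_def by blast
  then obtain n where n: "n > 0" "(x, x) \<in> R ^^ n" using trancl_power by blast
  thus ?thesis using relpow_walk[OF n(2)] unfolding cyc_def by metis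
qed

lemma chord:
  assumes "\<forall>n'<n. \<not> cyc R n'" "0 < n" "c 0 = c n" "\<forall>i<n. (c i, c (Suc i)) \<in> R"
    "a < n" "b < n" "(c a, c b) \<in> R"
  shows "b = Suc a \<or> (Suc a = n \<and> b = 0)"
proof (rule ccontr)
  assume h: "\<not> (b = Suc a \<or> (Suc a = n \<and> b = 0))"
  show False
  proof (cases "Suc a < b")
    case True
    define \<delta> where "\<delta> = b - Suc a"
    define c' where "c' = (\<lambda>i. if i \<le> a then c i else c (i + \<delta>))"
    define n' where "n' = n - \<delta>"
    have n'l: "n' < n" "a < n'" using True assms(6) unfolding n'_def \<delta>_def by auto
    have "cyc R n'"
      unfolding cyc_def
    proof (intro conjI exI allI impI)
      show "0 < n'" using n'l by simp
      show "c' 0 = c' n'" using n'l assms(3,6) unfolding c'_def n'_def \<delta>_def by auto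
      fix i assume i: "i < n'"
      show "(c' i, c' (Suc i)) \<in> R"
      proof (cases "i < a")
        case True thus ?thesis using assms(4,5) unfolding c'_def by auto
      next
        case False
        show ?thesis
        proof (cases "i = a")
          case True
          have e: "Suc a + \<delta> = b" using \<open>Suc a < b\<close> unfolding \<delta>_def by simp
          have "c' (Suc i) = c b" using True e unfolding c'_def by simp
          moreover have "c' i = c a" using True unfolding c'_def by simp
          ultimately show ?thesis using assms(7) by simp
        next
          case False
          hence "a < i" using \<open>\<not> i < a\<close> by simp
          moreover have "i + \<delta> < n" using i unfolding n'_def \<delta>_def using True assms(6) by auto
          ultimately show ?thesis using assms(4) unfolding c'_def by auto
        qed
      qed
    qed
    thus False using assms(1) n'l by blast
  next
    case False
    hence ba: "b \<le> a" using h by auto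
    define c' where "c' = (\<lambda>i. if i \<le> a - b then c (b + i) else c b)"
    define n' where "n' = Suc (a - b)"
    have n'l: "n' < n" using h ba assms(5) unfolding n'_def by auto
    have "cyc R n'"
      unfolding cyc_def
    proof (intro conjI exI allI impI)
      show "0 < n'" unfolding n'_def by simp
      show "c' 0 = c' n'" unfolding c'_def n'_def by simp
      fix i assume i: "i < n'"
      show "(c' i, c' (Suc i)) \<in> R"
      proof (cases "i < a - b")
        case True thus ?thesis using assms(4,5) unfolding c'_def by auto
      next
        case False
        hence "i = a - b" using i unfolding n'_def by simp
        thus ?thesis using assms(7) ba unfolding c'_def by auto
      qed
    qed
    thus False using assms(1) n'l by blast
  qed
qed


lemma final_arith:
  fixes n k N s :: nat
  assumes "3 \<le> N" "N \<le> n + k" "k < n" "n \<le> 2 * k"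
    "s + (\<Sum>j\<in>J. c j) \<le> N * (k + 2)"
    "2 * (n + k - N) + 2 * ((N - 3) * (n - k - 1)) + N * (N - 1) + 2 * N \<le> 2 * (\<Sum>j\<in>J. c j)"
  shows "real s \<le> 2 + real ((2 * k + 2 - n) * (2 * k + 1 - n)) / 2"
proof -
  define C where "C = (\<Sum>j\<in>J. c j)"
  have "int (s + C) \<le> int (N * (k + 2))" using assms(5) unfolding C_def by (simp only: of_nat_le_iff)
  hence a5: "int s + int C \<le> int N * (int k + 2)" by (simp add: algebra_simps)
  have a6: "2 * (int n + int k - int N) + 2 * ((int N - 3) * (int n - int k - 1)) + int N * (int N - 1) + 2 * int N
      \<le> 2 * int C"
  proof -
    have "int (2 * (n + k - N) + 2 * ((N - 3) * (n - k - 1)) + N * (N - 1) + 2 * N) \<le> int (2 * C)"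
      using assms(6) unfolding C_def by (simp only: of_nat_le_iff)
    moreover have e1: "int (n + k - N) = int n + int k - int N" using assms(2) by simp
    moreover have e2: "int (N - 3) = int N - 3" using assms(1) by simp
    moreover have e3: "int (n - k - 1) = int n - int k - 1" using assms(3) by simp
    moreover have e4: "int (N - 1) = int N - 1" using assms(1) by simp
    ultimately show ?thesis by (simp only: of_nat_add of_nat_mult of_nat_numeral)
  qed
  define r where "r = 2 * int k + 1 - int n"
  define t where "t = int N - 2"
  have key: "(r - t) * (r - t + 1) \<ge> 0"
  proof (cases "r - t \<ge> 0")
    case True thus ?thesis by simp
  next
    case False
    hence "r - t \<le> -1" by simp
    hence "r - t + 1 \<le> 0" "r - t \<le> 0" by auto
    thus ?thesis using mult_nonpos_nonpos by blast
  qed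
  have iden: "2 * int N * (int k + 2) - 2 * (int n + int k - int N) - 2 * ((int N - 3) * (int n - int k - 1))
      - int N * (int N - 1) - 2 * int N + (r - t) * (r - t + 1) = 4 + r * (r + 1)"
    unfolding r_def t_def by (simp add: algebra_simps)
  have "2 * int s \<le> 4 + r * (r + 1)" using a5 a6 key iden by linarith
  moreover have "int ((2 * k + 2 - n) * (2 * k + 1 - n)) = (r + 1) * r"
  proof -
    have "int (2 * k + 2 - n) = r + 1" "int (2 * k + 1 - n) = r" unfolding r_def using assms(4) by auto
    thus ?thesis by (simp only: of_nat_mult)
  qed
  ultimately have "2 * int s \<le> 4 + int ((2 * k + 2 - n) * (2 * k + 1 - n))" by (simp add: algebra_simps)
  hence "real_of_int (2 * int s) \<le> real_of_int (4 + int ((2 * k + 2 - n) * (2 * k + 1 - n)))"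
    by (simp only: of_int_le_iff)
  hence "2 * real s \<le> 4 + real ((2 * k + 2 - n) * (2 * k + 1 - n))" by simp
  thus ?thesis by simp
qed


theorem theorem1p5:
  fixes n k :: nat and S :: "(cel \<times> cel) set"
  assumes "n \<ge> 3" and "k < n" and "n \<le> 2 * k"
    and "crown_independent n k S"
    and "\<not> crown_reversible n k S"
  shows "real (card S) \<le> 2 + real ((2 * k + 2 - n) * (2 * k + 1 - n)) / 2"
proof -
  let ?m = "n + k"
  define d where "d = n - k"
  have md: "?m = 2 * k + d" "1 \<le> d" unfolding d_def using assms(2) by auto
  have SI: "S \<subseteq> crown_Inc n k" using assms(4) unfolding crown_independent_def by blast
  let ?R = "Rof n k S"
  let ?J = "Jof S"
  let ?x = "xof ?m S"
  let ?y = "yof ?m k S"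
  have nacyc: "\<not> acyclic ?R" using rev_of_acyclic[OF assms(2) _ SI] assms(1,5) by auto
  obtain n1 where "cyc ?R n1" using cyc_of_not_acyclic[OF nacyc] by blast
  define n0 where "n0 = (LEAST n. cyc ?R n)"
  have cn0: "cyc ?R n0" unfolding n0_def by (rule LeastI) fact
  have minn: "\<forall>n'<n0. \<not> cyc ?R n'" unfolding n0_def using not_less_Least by blast
  obtain c where c: "0 < n0" "c 0 = c n0" "\<forall>i<n0. (c i, c (Suc i)) \<in> ?R"
    using cn0 unfolding cyc_def by blast
  have Jm: "?J \<subseteq> {..<?m}" by (rule S_fin(1)[OF assms(2) SI])
  have E: "\<And>a b. (a, b) \<in> ?R \<Longrightarrow> a \<in> ?J \<and> b < ?m \<and> \<not> memc ?m (?x a) (?y a) a b"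
  proof -
    fix a b assume ab: "(a, b) \<in> ?R"
    then obtain i where i: "(CA i, CB a) \<in> S" "k < fd ?m i b" "b < ?m" unfolding Rof_def by auto
    have aJ: "a \<in> ?J" using i(1) unfolding Jof_def by auto
    have "i \<in> Sof S a" using i(1) unfolding Sof_def by auto
    hence "\<not> memc ?m (?x a) (?y a) a b" using char[OF assms(2) SI aJ i(3)] i(2) by auto
    thus "a \<in> ?J \<and> b < ?m \<and> \<not> memc ?m (?x a) (?y a) a b" using aJ i(3) by blast
  qed
  have NE: "\<And>a b. a \<in> ?J \<Longrightarrow> b < ?m \<Longrightarrow> (a, b) \<notin> ?R \<Longrightarrow> memc ?m (?x a) (?y a) a b"
  proof (rule ccontr)
    fix a b assume ab: "a \<in> ?J" "b < ?m" "(a, b) \<notin> ?R" "\<not> memc ?m (?x a) (?y a) a b"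
    then obtain i where i: "i \<in> Sof S a" "\<not> fd ?m i b \<le> k" using char[OF assms(2) SI ab(1,2)] by blast
    hence "(a, b) \<in> ?R" unfolding Rof_def Sof_def using ab(2) by auto
    thus False using ab(3) by blast
  qed
  have cJ: "\<And>i. i < n0 \<Longrightarrow> c i \<in> ?J" using c(3) E by blast
  have cm: "\<And>i. i \<le> n0 \<Longrightarrow> c i < ?m"
  proof -
    fix i assume "i \<le> n0"
    thus "c i < ?m"
    proof (cases "i < n0")
      case True thus ?thesis using cJ Jm by auto
    next
      case False thus ?thesis using \<open>i \<le> n0\<close> c(1,2) cJ[of 0] Jm by auto
    qed
  qed
  have kc: "\<And>j. j \<in> ?J \<Longrightarrow> ?x j + ?y j \<le> k" using xy_le[OF assms(2) SI] by blast
  have nonedge: "\<And>a b. a < n0 \<Longrightarrow> b < n0 \<Longrightarrow> \<not> (b = Suc a \<or> (Suc a = n0 \<and> b = 0)) \<Longrightarrow>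
      memc ?m (?x (c a)) (?y (c a)) (c a) (c b)"
  proof -
    fix a b assume ab: "a < n0" "b < n0" "\<not> (b = Suc a \<or> (Suc a = n0 \<and> b = 0))"
    have "(c a, c b) \<notin> ?R" using chord[OF minn c(1-3) ab(1,2)] ab(3) by blast
    thus "memc ?m (?x (c a)) (?y (c a)) (c a) (c b)" using NE cJ[OF ab(1)] cm ab(2) by simp
  qed
  have edge: "\<And>a. a < n0 \<Longrightarrow> \<not> memc ?m (?x (c a)) (?y (c a)) (c a) (c (Suc a))"
    using c(3) E by blast
  consider "n0 = 1" | "n0 = 2" | "n0 = 3" | "4 \<le> n0" using c(1) by linarith
  thus ?thesis
  proof cases
    case 1
    have "\<not> memc ?m (?x (c 0)) (?y (c 0)) (c 0) (c 1)" using edge[of 0] 1 by simp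
    moreover have "c 1 = c 0" using c(2) 1 by simp
    ultimately show ?thesis using memc_self by metis
  next
    case 2
    have e0: "\<not> memc ?m (?x (c 0)) (?y (c 0)) (c 0) (c 1)" using edge[of 0] 2 by simp
    have e1: "\<not> memc ?m (?x (c 1)) (?y (c 1)) (c 1) (c 0)" using edge[of 1] 2 c(2) by (simp add: numeral_2_eq_2)
    have ne: "c 0 \<noteq> c 1" using e0 memc_self by metis
    have "c 0 \<in> ?J" "c 1 \<in> ?J" using cJ 2 by auto
    thus ?thesis using compat[OF assms(2) SI assms(4) _ _ ne] e0 e1 by blast
  next
    case 4
    have k2: "2 * k < ?m" using assms(2) by simp
    have f1: "memc ?m (?x (c 1)) (?y (c 1)) (c 1) (c 0)" using nonedge[of 1 0] 4 by simp
    have f2: "memc ?m (?x (c 2)) (?y (c 2)) (c 2) (c 0)" using nonedge[of 2 0] 4 by simp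
    have f3: "memc ?m (?x (c 0)) (?y (c 0)) (c 0) (c 3)" using nonedge[of 0 3] 4 by simp
    have f4: "memc ?m (?x (c 1)) (?y (c 1)) (c 1) (c 3)" using nonedge[of 1 3] 4 by simp
    have f5: "\<not> memc ?m (?x (c 2)) (?y (c 2)) (c 2) (c 3)" using edge[of 2] 4 by (simp add: numeral_3_eq_3)
    have f6: "memc ?m (?x (c 2)) (?y (c 2)) (c 2) (c 1)" using nonedge[of 2 1] 4 by simp
    have f7: "\<not> memc ?m (?x (c 0)) (?y (c 0)) (c 0) (c 1)" using edge[of 0] 4 by simp
    have f8: "memc ?m (?x (c 0)) (?y (c 0)) (c 0) (c 2)" using nonedge[of 0 2] 4 by simp
    have f9: "\<not> memc ?m (?x (c 1)) (?y (c 1)) (c 1) (c 2)" using edge[of 1] 4 by (simp add: numeral_2_eq_2)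
    have lt: "c 0 < ?m" "c 1 < ?m" "c 2 < ?m" "c 3 < ?m" using cm 4 by auto
    have kk: "?x (c 0) + ?y (c 0) \<le> k" "?x (c 1) + ?y (c 1) \<le> k" "?x (c 2) + ?y (c 2) \<le> k"
      using kc cJ 4 by auto
    have False
      by (rule helly[OF k2 lt(1) lt(1) lt(2) lt(3) lt(2) lt(3) lt(4) kk memc_self f1 f2 f3 f4 f5
            memc_self f6 f7 f8 memc_self f9])
    thus ?thesis ..
  next
    case 3
    have e0: "\<not> memc ?m (?x (c 0)) (?y (c 0)) (c 0) (c 1)" using edge[of 0] 3 by simp
    have e1: "\<not> memc ?m (?x (c 1)) (?y (c 1)) (c 1) (c 2)" using edge[of 1] 3 by (simp add: numeral_2_eq_2)
    have e2: "\<not> memc ?m (?x (c 2)) (?y (c 2)) (c 2) (c 0)" using edge[of 2] 3 c(2) by (simp add: numeral_3_eq_3)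
    have f1: "memc ?m (?x (c 1)) (?y (c 1)) (c 1) (c 0)" using nonedge[of 1 0] 3 by simp
    have f2: "memc ?m (?x (c 2)) (?y (c 2)) (c 2) (c 1)" using nonedge[of 2 1] 3 by simp
    have f3: "memc ?m (?x (c 0)) (?y (c 0)) (c 0) (c 2)" using nonedge[of 0 2] 3 by simp
    have cJ3: "c 0 \<in> ?J" "c 1 \<in> ?J" "c 2 \<in> ?J" using cJ 3 by auto
    have d10: "c 1 \<noteq> c 0" using e0 memc_self by metis
    have d20: "c 2 \<noteq> c 0" using e2 memc_self by metis
    have d21: "c 2 \<noteq> c 1" using e1 memc_self by metis
    have N3: "3 \<le> card ?J"
    proof -
      have "card {c 0, c 1, c 2} = 3" using d10 d20 d21 by auto
      moreover have "{c 0, c 1, c 2} \<subseteq> ?J" using cJ3 by auto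
      ultimately show ?thesis using card_mono[OF S_fin(2)[OF assms(2) SI]] by metis
    qed
    have Nm: "card ?J \<le> ?m" using card_mono[OF _ Jm] by simp
    have cmp: "\<forall>a\<in>?J. \<forall>b\<in>?J. a \<noteq> b \<longrightarrow> memc ?m (?x a) (?y a) a b \<or> memc ?m (?x b) (?y b) b a"
      using compat[OF assms(2) SI assms(4)] by blast
    have CM: "2 * (?m - card ?J) + 2 * ((card ?J - 3) * (d - 1)) + card ?J * (card ?J - 1) + 2 * card ?J
       \<le> 2 * (\<Sum>j\<in>?J. card (Iset ?m ?x ?y j))"
      by (rule count_main[OF md S_fin(2)[OF assms(2) SI] Jm cJ3 _ cmp e0 e1 e2 f1 f2 f3])
        (use kc in blast)
    have W: "card S + (\<Sum>j\<in>?J. card (Iset ?m ?x ?y j)) \<le> card ?J * (k + 2)"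
    proof -
      have "card S + (\<Sum>j\<in>?J. card (Iset ?m ?x ?y j)) =
          (\<Sum>j\<in>?J. card (Sof S j) + card (Iset ?m ?x ?y j))"
        using card_S[OF assms(2) SI] by (simp add: sum.distrib)
      also have "\<dots> \<le> (\<Sum>j\<in>?J. k + 2)" by (rule sum_mono) (rule weight[OF assms(2) SI])
      finally show ?thesis by simp
    qed
    have dd: "d - 1 = n - k - 1" unfolding d_def by simp
    show ?thesis
      by (rule final_arith[OF N3 Nm assms(2,3) W]) (use CM dd in simp)
  qed
qed


end
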